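(* Let $\Bbbk=\mathbb{K}_0\subsetneq\mathbb{K}_1\subsetneq\cdots\subsetneq\mathbb{K}_m$ be a tower of fields with $[\mathbb{K}_j:\mathbb{K}_{j-1}]=2$ for $j=1,\dots,m$, and let $n\ge1$. There exists an algorithm for the inversion of a generic element of $M_n(\mathbb{K}_m)$ which costs $3(3^m-2^m)$ multiplications and $2^m$ inversions in $M_n(\Bbbk)$.
   Context: $M_n(\mathbb{L})$ denotes $n\times n$ matrices over $\mathbb{L}$. For each $j$, $\mathbb{K}_j=\mathbb{K}_{j-1}[\xi_j]$ where the minimal polynomial of $\xi_j$ over $\mathbb{K}_{j-1}$ is in normal form $x^2+\tau_j$ or $x^2+x+\tau_j$. "Generic" means for all elements outside a proper Zariski-closed subset of $M_n(\mathbb{K}_m)\cong\Bbbk^{2^m n^2}$. Additions and scalar multiplications are not counted. *)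

theory Defs
  imports "Jordan_Normal_Form.Matrix"
begin

definition is_subfield :: "'a::field set \<Rightarrow> bool" where
  "is_subfield S \<longleftrightarrow> 0 \<in> S \<and> 1 \<in> S \<and>
     (\<forall>x\<in>S. \<forall>y\<in>S. x + y \<in> S \<and> x * y \<in> S) \<and>
     (\<forall>x\<in>S. - x \<in> S \<and> inverse x \<in> S)"

definition is_basis_over :: "'a::field set \<Rightarrow> 'a set \<Rightarrow> (nat \<Rightarrow> 'a) \<Rightarrow> nat \<Rightarrow> bool" where
  "is_basis_over F E b N \<longleftrightarrow> (\<forall>i<N. b i \<in> E) \<and>
     (\<forall>x\<in>E. \<exists>!c. (\<forall>i<N. c i \<in> F) \<and> (\<forall>i\<ge>N. c i = 0) \<and> x = (\<Sum>i<N. c i * b i))"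

definition ext_degree_eq :: "'a::field set \<Rightarrow> 'a set \<Rightarrow> nat \<Rightarrow> bool" where
  "ext_degree_eq F E d \<longleftrightarrow> F \<subseteq> E \<and> (\<exists>b. is_basis_over F E b d)"

section \<open>Coordinates: M_n(K_m) identified with M_n(k)^N via a k-basis of K_m\<close>

definition assemble :: "nat \<Rightarrow> (nat \<Rightarrow> 'a::field) \<Rightarrow> 'a mat list \<Rightarrow> 'a mat" where
  "assemble n b Xs = mat n n (\<lambda>(r,s). \<Sum>i<length Xs. b i * (Xs ! i) $$ (r,s))"

definition coord_space :: "'a::field set \<Rightarrow> nat \<Rightarrow> nat \<Rightarrow> 'a mat list set" where
  "coord_space F N n = {Xs. length Xs = N \<and>
     (\<forall>X\<in>set Xs. X \<in> carrier_mat n n \<and> (\<forall>r<n. \<forall>s<n. X $$ (r,s) \<in> F))}"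

inductive_set polyfun :: "'a::field set \<Rightarrow> nat \<Rightarrow> nat \<Rightarrow> ('a mat list \<Rightarrow> 'a) set"
  for F :: "'a set" and N n :: nat where
  pf_const: "c \<in> F \<Longrightarrow> (\<lambda>_. c) \<in> polyfun F N n"
| pf_var: "i < N \<Longrightarrow> r < n \<Longrightarrow> s < n \<Longrightarrow> (\<lambda>Xs. (Xs ! i) $$ (r,s)) \<in> polyfun F N n"
| pf_add: "f \<in> polyfun F N n \<Longrightarrow> g \<in> polyfun F N n \<Longrightarrow> (\<lambda>Xs. f Xs + g Xs) \<in> polyfun F N n"
| pf_mul: "f \<in> polyfun F N n \<Longrightarrow> g \<in> polyfun F N n \<Longrightarrow> (\<lambda>Xs. f Xs * g Xs) \<in> polyfun F N n"

definition zariski_closed :: "'a::field set \<Rightarrow> nat \<Rightarrow> nat \<Rightarrow> 'a mat list set \<Rightarrow> bool" where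
  "zariski_closed F N n Z \<longleftrightarrow>
     (\<exists>P \<subseteq> polyfun F N n. Z = {Xs \<in> coord_space F N n. \<forall>f\<in>P. f Xs = 0})"

definition generic :: "'a::field set \<Rightarrow> nat \<Rightarrow> nat \<Rightarrow> ('a mat list \<Rightarrow> bool) \<Rightarrow> bool" where
  "generic F N n Q \<longleftrightarrow> (\<exists>Z. zariski_closed F N n Z \<and> Z \<noteq> coord_space F N n \<and>
     (\<forall>Xs \<in> coord_space F N n - Z. Q Xs))"

text \<open>Lin: F-linear combination of earlier values (free); Const c: the scalar matrix c*I (free);
  Mul i j: product (counted); Inv i: inverse (counted, fails if not invertible).\<close>
datatype 'a instr = Lin "('a \<times> nat) list" | Const 'a | Mul nat nat | Inv nat

fun exec_instr :: "nat \<Rightarrow> 'a::field mat list \<Rightarrow> 'a instr \<Rightarrow> 'a mat option" where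
  "exec_instr n vs (Lin cs) =
     (if (\<forall>p\<in>set cs. snd p < length vs)
      then Some (mat n n (\<lambda>(r,s). \<Sum>p\<leftarrow>cs. fst p * (vs ! snd p) $$ (r,s)))
      else None)"
| "exec_instr n vs (Const c) = Some (c \<cdot>\<^sub>m 1\<^sub>m n)"
| "exec_instr n vs (Mul i j) =
     (if i < length vs \<and> j < length vs then Some (vs ! i * vs ! j) else None)"
| "exec_instr n vs (Inv i) =
     (if i < length vs \<and> (\<exists>B. B \<in> carrier_mat n n \<and> vs ! i * B = 1\<^sub>m n \<and> B * vs ! i = 1\<^sub>m n)
      then Some (SOME B. B \<in> carrier_mat n n \<and> vs ! i * B = 1\<^sub>m n \<and> B * vs ! i = 1\<^sub>m n)
      else None)"

text \<open>Run a program; the value list starts with the inputs, each instruction appends one value.\<close>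
fun run :: "nat \<Rightarrow> 'a::field instr list \<Rightarrow> 'a mat list \<Rightarrow> 'a mat list option" where
  "run n [] vs = Some vs"
| "run n (ins # p) vs =
     (case exec_instr n vs ins of None \<Rightarrow> None | Some v \<Rightarrow> run n p (vs @ [v]))"

fun instr_over :: "'a set \<Rightarrow> 'a instr \<Rightarrow> bool" where
  "instr_over F (Lin cs) = (\<forall>p\<in>set cs. fst p \<in> F)"
| "instr_over F (Const c) = (c \<in> F)"
| "instr_over F (Mul i j) = True"
| "instr_over F (Inv i) = True"

definition prog_over :: "'a set \<Rightarrow> 'a instr list \<Rightarrow> bool" where
  "prog_over F p \<longleftrightarrow> (\<forall>ins\<in>set p. instr_over F ins)"

fun is_mul :: "'a instr \<Rightarrow> bool" where
  "is_mul (Mul i j) = True" | "is_mul _ = False"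

fun is_inv :: "'a instr \<Rightarrow> bool" where
  "is_inv (Inv i) = True" | "is_inv _ = False"

definition count_mul :: "'a instr list \<Rightarrow> nat" where
  "count_mul p = length (filter is_mul p)"

definition count_inv :: "'a instr list \<Rightarrow> nat" where
  "count_inv p = length (filter is_inv p)"

end

theory Submission
  imports Defs "Jordan_Normal_Form.Determinant"
begin


lemma subf_basic:
  assumes "is_subfield F"
  shows "0 \<in> F" "1 \<in> F" "x \<in> F \<Longrightarrow> y \<in> F \<Longrightarrow> x + y \<in> F"
    "x \<in> F \<Longrightarrow> y \<in> F \<Longrightarrow> x * y \<in> F" "x \<in> F \<Longrightarrow> - x \<in> F"
    "x \<in> F \<Longrightarrow> inverse x \<in> F"
  using assms unfolding is_subfield_def by auto

lemma subf_diff: "is_subfield F \<Longrightarrow> x \<in> F \<Longrightarrow> y \<in> F \<Longrightarrow> x - y \<in> F"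
  using subf_basic[of F] by (metis diff_conv_add_uminus)

lemma subf_div: "is_subfield F \<Longrightarrow> x \<in> F \<Longrightarrow> y \<in> F \<Longrightarrow> x / y \<in> F"
  using subf_basic[of F] by (metis divide_inverse)

lemma subf_sum: assumes "is_subfield F" "\<forall>i\<in>A. f i \<in> F" shows "sum f A \<in> F"
proof (cases "finite A")
  case True then show ?thesis using assms(2)
    by (induction A rule: finite_induct) (auto intro: subf_basic[OF assms(1)])
qed (simp add: subf_basic[OF assms(1)])

lemma subf_prod: assumes "is_subfield F" "\<forall>i\<in>A. f i \<in> F" shows "prod f A \<in> F"
proof (cases "finite A")
  case True then show ?thesis using assms(2)
    by (induction A rule: finite_induct) (auto intro: subf_basic[OF assms(1)])
qed (simp add: subf_basic[OF assms(1)])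

lemma subf_sum_list: assumes "is_subfield F" "\<forall>x\<in>set xs. f x \<in> F" shows "(\<Sum>x\<leftarrow>xs. f x) \<in> F"
  using assms(2) by (induction xs) (auto intro: subf_basic[OF assms(1)])

lemma subf_pow: assumes "is_subfield F" "x \<in> F" shows "x ^ k \<in> F"
  by (induction k) (auto intro: subf_basic[OF assms(1)] assms(2))

lemma subf_signof: assumes "is_subfield F" shows "(signof p :: 'a::field) \<in> F"
  using subf_basic[OF assms] by (auto simp: sign_def)

lemma det_in:
  assumes F: "is_subfield F" and A: "A \<in> carrier_mat k k" and e: "\<forall>r<k. \<forall>s<k. A $$ (r,s) \<in> F"
  shows "det A \<in> F"
  unfolding det_def'[OF A]
proof (rule subf_sum[OF F], intro ballI)
  fix p assume "p \<in> {p. p permutes {0..<k}}"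
  hence p: "p permutes {0..<k}" by simp
  have "(\<Prod>i = 0..<k. A $$ (i, p i)) \<in> F"
    by (rule subf_prod[OF F]) (use e permutes_in_image[OF p] in auto)
  then show "signof p * (\<Prod>i = 0..<k. A $$ (i, p i)) \<in> F"
    by (intro subf_basic(4)[OF F] subf_signof[OF F])
qed

lemma pf_sum: assumes F: "is_subfield F" and "\<forall>i\<in>A. f i \<in> polyfun F N n"
  shows "(\<lambda>x. \<Sum>i\<in>A. f i x) \<in> polyfun F N n"
proof (cases "finite A")
  case True then show ?thesis using assms(2)
  proof (induction A rule: finite_induct)
    case empty then show ?case using pf_const[OF subf_basic(1)[OF F]] by simp
  next
    case (insert a A)
    then show ?case using pf_add[of "f a" F N n "\<lambda>x. \<Sum>i\<in>A. f i x"] by simp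
  qed
qed (simp add: pf_const[OF subf_basic(1)[OF F]])

lemma pf_prod: assumes F: "is_subfield F" and "\<forall>i\<in>A. f i \<in> polyfun F N n"
  shows "(\<lambda>x. \<Prod>i\<in>A. f i x) \<in> polyfun F N n"
proof (cases "finite A")
  case True then show ?thesis using assms(2)
  proof (induction A rule: finite_induct)
    case empty then show ?case using pf_const[OF subf_basic(2)[OF F]] by simp
  next
    case (insert a A)
    then show ?case using pf_mul[of "f a" F N n "\<lambda>x. \<Prod>i\<in>A. f i x"] by simp
  qed
qed (simp add: pf_const[OF subf_basic(2)[OF F]])

lemma pf_sum_list: assumes F: "is_subfield F" and "\<forall>c\<in>set cs. f c \<in> polyfun F N n"
  shows "(\<lambda>x. \<Sum>c\<leftarrow>cs. f c x) \<in> polyfun F N n"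
  using assms(2)
proof (induction cs)
  case Nil then show ?case using pf_const[OF subf_basic(1)[OF F]] by simp
next
  case (Cons a cs)
  then show ?case using pf_add[of "f a" F N n "\<lambda>x. \<Sum>c\<leftarrow>cs. f c x"] by simp
qed

lemma pf_cmul: "is_subfield F \<Longrightarrow> c \<in> F \<Longrightarrow> f \<in> polyfun F N n \<Longrightarrow> (\<lambda>x. c * f x) \<in> polyfun F N n"
  using pf_mul[OF pf_const] by blast

lemma pf_det:
  assumes F: "is_subfield F" and Q: "\<forall>r<k. \<forall>s<k. Q r s \<in> polyfun F N n"
  shows "(\<lambda>x. det (mat k k (\<lambda>(r,s). Q r s x))) \<in> polyfun F N n"
proof -
  have eq: "(\<lambda>x. det (mat k k (\<lambda>(r,s). Q r s x))) =
     (\<lambda>x. \<Sum>p\<in>{p. p permutes {0..<k}}. signof p * (\<Prod>i\<in>{0..<k}. Q i (p i) x))"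
  proof
    fix x
    show "det (mat k k (\<lambda>(r,s). Q r s x)) = (\<Sum>p\<in>{p. p permutes {0..<k}}. signof p * (\<Prod>i\<in>{0..<k}. Q i (p i) x))"
      unfolding det_def'[of "mat k k (\<lambda>(r,s). Q r s x)" k, OF mat_carrier]
    proof (rule sum.cong[OF refl])
      fix p assume "p \<in> {p. p permutes {0..<k}}"
      hence p: "p permutes {0..<k}" by simp
      show "signof p * (\<Prod>i = 0..<k. mat k k (\<lambda>(r,s). Q r s x) $$ (i, p i)) = signof p * (\<Prod>i\<in>{0..<k}. Q i (p i) x)"
        using permutes_in_image[OF p] by (intro arg_cong2[where f="(*)"] refl prod.cong) auto
    qed
  qed
  show ?thesis unfolding eq
  proof (rule pf_sum[OF F], intro ballI)
    fix p assume "p \<in> {p. p permutes {0..<k}}"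
    hence p: "p permutes {0..<k}" by simp
    have "(\<lambda>x. \<Prod>i\<in>{0..<k}. Q i (p i) x) \<in> polyfun F N n"
      by (rule pf_prod[OF F]) (use Q permutes_in_image[OF p] in auto)
    then show "(\<lambda>x. signof p * (\<Prod>i\<in>{0..<k}. Q i (p i) x)) \<in> polyfun F N n"
      by (rule pf_cmul[OF F subf_signof[OF F]])
  qed
qed

lemma inv_unique:
  assumes "(A::'a::field mat) \<in> carrier_mat n n" "B \<in> carrier_mat n n" "C \<in> carrier_mat n n"
    "B * A = 1\<^sub>m n" "A * C = 1\<^sub>m n"
  shows "B = C"
proof -
  have "B = B * (A * C)" using assms(5) right_mult_one_mat[OF assms(2)] by simp
  also have "\<dots> = (B * A) * C" by (rule assoc_mult_mat[OF assms(2,1,3), symmetric])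
  also have "\<dots> = C" using assms(4) left_mult_one_mat[OF assms(3)] by simp
  finally show ?thesis .
qed

lemma some_inv:
  assumes "(A::'a::field mat) \<in> carrier_mat n n" "B \<in> carrier_mat n n" "A * B = 1\<^sub>m n" "B * A = 1\<^sub>m n"
  shows "(SOME B. B \<in> carrier_mat n n \<and> A * B = 1\<^sub>m n \<and> B * A = 1\<^sub>m n) = B"
proof -
  let ?P = "\<lambda>B. B \<in> carrier_mat n n \<and> A * B = 1\<^sub>m n \<and> B * A = 1\<^sub>m n"
  have "?P (SOME B. ?P B)" by (rule someI[of ?P B]) (use assms in auto)
  then show ?thesis using inv_unique[of A n "SOME B. ?P B" B] assms by auto
qed

lemma smult_smult_mat: "(a::'a::semigroup_mult) \<cdot>\<^sub>m (b \<cdot>\<^sub>m A) = (a * b) \<cdot>\<^sub>m A"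
  by (rule eq_matI) (auto simp: mult.assoc)

lemma smult_one_mat: "(1::'a::monoid_mult) \<cdot>\<^sub>m A = A"
  by (rule eq_matI) auto

lemma adj_inverse:
  assumes A: "(A::'a::field mat) \<in> carrier_mat n n" and d: "det A \<noteq> 0"
  shows "A * ((1 / det A) \<cdot>\<^sub>m adj_mat A) = 1\<^sub>m n" "((1 / det A) \<cdot>\<^sub>m adj_mat A) * A = 1\<^sub>m n"
    "(1 / det A) \<cdot>\<^sub>m adj_mat A \<in> carrier_mat n n"
proof -
  note adj = adj_mat[OF A]
  show "A * ((1 / det A) \<cdot>\<^sub>m adj_mat A) = 1\<^sub>m n"
    using adj d A by (simp add: mult_smult_distrib smult_smult_mat smult_one_mat)
  show "((1 / det A) \<cdot>\<^sub>m adj_mat A) * A = 1\<^sub>m n"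
    using adj d A by (simp add: mult_smult_assoc_mat smult_smult_mat smult_one_mat)
  show "(1 / det A) \<cdot>\<^sub>m adj_mat A \<in> carrier_mat n n" using adj by simp
qed

lemma inv_exists_iff:
  assumes A: "(A::'a::field mat) \<in> carrier_mat n n"
  shows "(\<exists>B. B \<in> carrier_mat n n \<and> A * B = 1\<^sub>m n \<and> B * A = 1\<^sub>m n) \<longleftrightarrow> det A \<noteq> 0"
proof
  assume "\<exists>B. B \<in> carrier_mat n n \<and> A * B = 1\<^sub>m n \<and> B * A = 1\<^sub>m n"
  then obtain B where B: "B \<in> carrier_mat n n" "A * B = 1\<^sub>m n" by auto
  show "det A \<noteq> 0" using det_mult[OF A B(1)] B(2) by auto
next
  assume "det A \<noteq> 0"
  then show "\<exists>B. B \<in> carrier_mat n n \<and> A * B = 1\<^sub>m n \<and> B * A = 1\<^sub>m n"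
    using adj_inverse[OF A] by blast
qed



lemma run_append: "run n (p @ q) vs = (case run n p vs of None \<Rightarrow> None | Some vs' \<Rightarrow> run n q vs')"
  by (induction p arbitrary: vs) (auto split: option.splits)

lemma run_length: "run n p vs = Some vs' \<Longrightarrow> \<exists>ws. vs' = vs @ ws \<and> length ws = length p"
proof (induction p arbitrary: vs)
  case (Cons a p)
  then show ?case by (fastforce split: option.splits)
qed simp

lemma run_snoc: "run n (p @ [ins]) vs = (case run n p vs of None \<Rightarrow> None | Some vs' \<Rightarrow>
   (case exec_instr n vs' ins of None \<Rightarrow> None | Some v \<Rightarrow> Some (vs' @ [v])))"
  by (simp add: run_append split: option.splits)

lemma sum_list_div: "(\<Sum>c\<leftarrow>cs. (f c :: 'a::field) * h c / g) = (\<Sum>c\<leftarrow>cs. f c * h c) / g"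
  by (induction cs) (auto simp: field_simps add_divide_distrib)

lemma smult_inv_pair:
  assumes A: "A \<in> carrier_mat n n" and B: "B \<in> carrier_mat n n" and AB: "A * B = d \<cdot>\<^sub>m 1\<^sub>m n"
    and abd: "a * b * d = (1::'a::field)"
  shows "(a \<cdot>\<^sub>m A) * (b \<cdot>\<^sub>m B) = 1\<^sub>m n"
proof -
  have "(a \<cdot>\<^sub>m A) * (b \<cdot>\<^sub>m B) = a \<cdot>\<^sub>m (A * (b \<cdot>\<^sub>m B))"
    by (rule mult_smult_assoc_mat[OF A, of _ n]) (use B in simp)
  also have "A * (b \<cdot>\<^sub>m B) = b \<cdot>\<^sub>m (A * B)" by (rule mult_smult_distrib[OF A B])
  finally show ?thesis using AB abd by (simp add: smult_smult_mat mult.assoc smult_one_mat)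
qed

lemma prog_rep:
  assumes F: "is_subfield F" and P: "prog_over F p"
  shows "\<exists>g Q. g \<in> polyfun F N n \<and> (\<forall>i r s. Q i r s \<in> polyfun F N n) \<and>
   (\<forall>x\<in>coord_space F N n. (g x \<noteq> 0 \<longleftrightarrow> run n p x \<noteq> None) \<and>
      (\<forall>vs. run n p x = Some vs \<longrightarrow> (\<forall>i<length vs. vs!i \<in> carrier_mat n n \<and>
          (\<forall>r<n. \<forall>s<n. (vs!i) $$ (r,s) = Q i r s x / g x))))"
  using P
proof (induction p rule: rev_induct)
  case Nil
  have c0: "(\<lambda>_. 0) \<in> polyfun F N n" and c1: "(\<lambda>_. 1) \<in> polyfun F N n"
    using pf_const subf_basic[OF F] by auto
  define Q where "Q = (\<lambda>i r s. if i < N \<and> r < n \<and> s < n then (\<lambda>xs::'a mat list. (xs ! i) $$ (r,s)) else (\<lambda>_. 0))"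
  have "\<forall>i r s. Q i r s \<in> polyfun F N n" unfolding Q_def using c0 pf_var by auto
  moreover have "\<forall>x\<in>coord_space F N n. ((\<lambda>_. 1::'a) x \<noteq> 0 \<longleftrightarrow> run n [] x \<noteq> None) \<and>
      (\<forall>vs. run n [] x = Some vs \<longrightarrow> (\<forall>i<length vs. vs!i \<in> carrier_mat n n \<and>
          (\<forall>r<n. \<forall>s<n. (vs!i) $$ (r,s) = Q i r s x / (\<lambda>_. 1) x)))"
    unfolding coord_space_def Q_def by auto
  ultimately show ?case using c1 by blast
next
  case (snoc ins p)
  have Pp: "prog_over F p" and Pi: "instr_over F ins" using snoc.prems by (auto simp: prog_over_def)
  obtain g Q where g: "g \<in> polyfun F N n" and Q: "\<forall>i r s. Q i r s \<in> polyfun F N n"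
    and R: "\<forall>x\<in>coord_space F N n. (g x \<noteq> 0 \<longleftrightarrow> run n p x \<noteq> None) \<and>
      (\<forall>vs. run n p x = Some vs \<longrightarrow> (\<forall>i<length vs. vs!i \<in> carrier_mat n n \<and>
          (\<forall>r<n. \<forall>s<n. (vs!i) $$ (r,s) = Q i r s x / g x)))"
    using snoc.IH[OF Pp] by blast
  define L where "L = N + length p"
  have lenL: "\<And>x vs. x \<in> coord_space F N n \<Longrightarrow> run n p x = Some vs \<Longrightarrow> length vs = L"
    using run_length unfolding L_def coord_space_def by fastforce
  have c0: "(\<lambda>_. 0) \<in> polyfun F N n" using pf_const subf_basic[OF F] by auto
  have fail: "\<exists>g Q. g \<in> polyfun F N n \<and> (\<forall>i r s. Q i r s \<in> polyfun F N n) \<and>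
   (\<forall>x\<in>coord_space F N n. (g x \<noteq> 0 \<longleftrightarrow> run n (p @ [ins]) x \<noteq> None) \<and>
      (\<forall>vs. run n (p @ [ins]) x = Some vs \<longrightarrow> (\<forall>i<length vs. vs!i \<in> carrier_mat n n \<and>
          (\<forall>r<n. \<forall>s<n. (vs!i) $$ (r,s) = Q i r s x / g x))))"
    if nf: "\<And>x vs. x \<in> coord_space F N n \<Longrightarrow> run n p x = Some vs \<Longrightarrow> exec_instr n vs ins = None"
    apply (rule exI[of _ "\<lambda>_. 0"], rule exI[of _ Q])
    using c0 Q nf by (auto simp: run_snoc split: option.splits)
  have c0: "(\<lambda>_. 0) \<in> polyfun F N n" using pf_const subf_basic[OF F] by auto
  show ?case
  proof (cases ins)
    case (Lin cs)
    show ?thesis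
    proof (cases "\<forall>c\<in>set cs. snd c < L")
      case False
      show ?thesis by (rule fail) (use False lenL in \<open>auto simp: Lin\<close>)
    next
      case True
      define Q' where "Q' = (\<lambda>i r s. if i = L then (\<lambda>x. \<Sum>c\<leftarrow>cs. fst c * Q (snd c) r s x) else Q i r s)"
      have "\<forall>i r s. Q' i r s \<in> polyfun F N n"
        unfolding Q'_def using Q Pi Lin by (auto intro!: pf_sum_list[OF F] pf_cmul[OF F])
      moreover have "\<forall>x\<in>coord_space F N n. (g x \<noteq> 0 \<longleftrightarrow> run n (p @ [ins]) x \<noteq> None) \<and>
      (\<forall>vs. run n (p @ [ins]) x = Some vs \<longrightarrow> (\<forall>i<length vs. vs!i \<in> carrier_mat n n \<and>
          (\<forall>r<n. \<forall>s<n. (vs!i) $$ (r,s) = Q' i r s x / g x)))"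
      proof
        fix x assume x: "x \<in> coord_space F N n"
        show "(g x \<noteq> 0 \<longleftrightarrow> run n (p @ [ins]) x \<noteq> None) \<and>
      (\<forall>vs. run n (p @ [ins]) x = Some vs \<longrightarrow> (\<forall>i<length vs. vs!i \<in> carrier_mat n n \<and>
          (\<forall>r<n. \<forall>s<n. (vs!i) $$ (r,s) = Q' i r s x / g x)))"
        proof (cases "run n p x")
          case None then show ?thesis using R x by (auto simp: run_snoc)
        next
          case (Some vs)
          have len: "length vs = L" using lenL[OF x Some] .
          have Rv: "\<forall>i<length vs. vs!i \<in> carrier_mat n n \<and>
              (\<forall>r<n. \<forall>s<n. (vs!i) $$ (r,s) = Q i r s x / g x)" and gx: "g x \<noteq> 0"
            using R x Some by auto
          have run': "run n (p @ [ins]) x = Some (vs @ [mat n n (\<lambda>(r,s). \<Sum>c\<leftarrow>cs. fst c * (vs ! snd c) $$ (r,s))])"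
            using True len by (simp add: run_snoc Some Lin)
          have ent: "(\<Sum>c\<leftarrow>cs. fst c * (vs ! snd c) $$ (r,s)) = (\<Sum>c\<leftarrow>cs. fst c * Q (snd c) r s x) / g x"
            if "r < n" "s < n" for r s
          proof -
            have "(\<Sum>c\<leftarrow>cs. fst c * (vs ! snd c) $$ (r,s)) = (\<Sum>c\<leftarrow>cs. fst c * (Q (snd c) r s x / g x))"
              by (rule arg_cong[where f=sum_list], rule map_cong[OF refl]) (use Rv True len that in auto)
            then show ?thesis by (simp add: sum_list_div)
          qed
          show ?thesis using gx Rv len ent unfolding run'
            by (auto simp: Q'_def nth_append less_Suc_eq)
        qed
      qed
      ultimately show ?thesis using g by blast
    qed
  next
    case (Const c)
    define Q' where "Q' = (\<lambda>i r s. if i = L then (\<lambda>x. (if r = s then c else 0) * g x) else Q i r s)"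
    have "\<forall>i r s. Q' i r s \<in> polyfun F N n"
      unfolding Q'_def using Q Pi Const g subf_basic[OF F] c0 by (auto intro!: pf_cmul[OF F])
    moreover have "\<forall>x\<in>coord_space F N n. (g x \<noteq> 0 \<longleftrightarrow> run n (p @ [ins]) x \<noteq> None) \<and>
      (\<forall>vs. run n (p @ [ins]) x = Some vs \<longrightarrow> (\<forall>i<length vs. vs!i \<in> carrier_mat n n \<and>
          (\<forall>r<n. \<forall>s<n. (vs!i) $$ (r,s) = Q' i r s x / g x)))"
    proof
      fix x assume x: "x \<in> coord_space F N n"
      show "(g x \<noteq> 0 \<longleftrightarrow> run n (p @ [ins]) x \<noteq> None) \<and>
      (\<forall>vs. run n (p @ [ins]) x = Some vs \<longrightarrow> (\<forall>i<length vs. vs!i \<in> carrier_mat n n \<and>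
          (\<forall>r<n. \<forall>s<n. (vs!i) $$ (r,s) = Q' i r s x / g x)))"
      proof (cases "run n p x")
        case None then show ?thesis using R x by (auto simp: run_snoc)
      next
        case (Some vs)
        have len: "length vs = L" using lenL[OF x Some] .
        have Rv: "\<forall>i<length vs. vs!i \<in> carrier_mat n n \<and>
            (\<forall>r<n. \<forall>s<n. (vs!i) $$ (r,s) = Q i r s x / g x)" and gx: "g x \<noteq> 0"
          using R x Some by auto
        have run': "run n (p @ [ins]) x = Some (vs @ [c \<cdot>\<^sub>m 1\<^sub>m n])"
          by (simp add: run_snoc Some Const)
        show ?thesis using gx Rv len unfolding run'
          by (auto simp: Q'_def nth_append less_Suc_eq)
      qed
    qed
    ultimately show ?thesis using g by blast
  next
    case (Mul i j)
    show ?thesis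
    proof (cases "i < L \<and> j < L")
      case False
      show ?thesis by (rule fail) (use False lenL in \<open>auto simp: Mul\<close>)
    next
      case True
      define Q' where "Q' = (\<lambda>k r s. if k = L then (\<lambda>x. \<Sum>t\<in>{0..<n}. Q i r t x * Q j t s x) else (\<lambda>x. Q k r s x * g x))"
      define g' where "g' = (\<lambda>x. g x * g x)"
      have "\<forall>k r s. Q' k r s \<in> polyfun F N n"
        unfolding Q'_def using Q g by (auto intro!: pf_sum[OF F] pf_mul)
      moreover have "g' \<in> polyfun F N n" unfolding g'_def by (rule pf_mul[OF g g])
      moreover have "\<forall>x\<in>coord_space F N n. (g' x \<noteq> 0 \<longleftrightarrow> run n (p @ [ins]) x \<noteq> None) \<and>
      (\<forall>vs. run n (p @ [ins]) x = Some vs \<longrightarrow> (\<forall>k<length vs. vs!k \<in> carrier_mat n n \<and>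
          (\<forall>r<n. \<forall>s<n. (vs!k) $$ (r,s) = Q' k r s x / g' x)))"
      proof
        fix x assume x: "x \<in> coord_space F N n"
        show "(g' x \<noteq> 0 \<longleftrightarrow> run n (p @ [ins]) x \<noteq> None) \<and>
      (\<forall>vs. run n (p @ [ins]) x = Some vs \<longrightarrow> (\<forall>k<length vs. vs!k \<in> carrier_mat n n \<and>
          (\<forall>r<n. \<forall>s<n. (vs!k) $$ (r,s) = Q' k r s x / g' x)))"
        proof (cases "run n p x")
          case None then show ?thesis using R x by (auto simp: run_snoc g'_def)
        next
          case (Some vs)
          have len: "length vs = L" using lenL[OF x Some] .
          have Rv: "\<forall>i<length vs. vs!i \<in> carrier_mat n n \<and>
              (\<forall>r<n. \<forall>s<n. (vs!i) $$ (r,s) = Q i r s x / g x)" and gx: "g x \<noteq> 0"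
            using R x Some by auto
          have run': "run n (p @ [ins]) x = Some (vs @ [vs ! i * vs ! j])"
            using True len by (simp add: run_snoc Some Mul)
          have ci: "vs ! i \<in> carrier_mat n n" and cj: "vs ! j \<in> carrier_mat n n" using Rv True len by auto
          have ent: "(vs ! i * vs ! j) $$ (r,s) = Q' L r s x / g' x" if "r < n" "s < n" for r s
          proof -
            have "(vs ! i * vs ! j) $$ (r,s) = (\<Sum>t\<in>{0..<n}. (vs!i) $$ (r,t) * (vs!j) $$ (t,s))"
              using ci cj that by (simp add: scalar_prod_def)
            also have "\<dots> = (\<Sum>t\<in>{0..<n}. (Q i r t x / g x) * (Q j t s x / g x))"
              by (rule sum.cong[OF refl]) (use Rv True len that in auto)
            also have "\<dots> = Q' L r s x / g' x"
              by (simp add: Q'_def g'_def sum_divide_distrib)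
            finally show ?thesis .
          qed
          have old: "Q k r s x / g x = Q' k r s x / g' x" if "k \<noteq> L" for k r s
            using gx that by (simp add: Q'_def g'_def)
          show ?thesis using gx Rv len ent ci cj old unfolding run'
            by (auto simp: g'_def nth_append less_Suc_eq)
        qed
      qed
      ultimately show ?thesis by blast
    qed
  next
    case (Inv i)
    show ?thesis
    proof (cases "i < L")
      case False
      show ?thesis by (rule fail) (use False lenL in \<open>auto simp: Inv\<close>)
    next
      case True
      define QM where "QM = (\<lambda>x. mat n n (\<lambda>(r,s). Q i r s x))"
      define D where "D = (\<lambda>x. det (QM x))"
      define idx where "idx = (\<lambda>a b::nat. if a < b then a else Suc a)"
      define Cf where "Cf = (\<lambda>r s x. (-1)^(s+r) * det (mat (n-1) (n-1) (\<lambda>(a,b). Q i (idx a s) (idx b r) x)))"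
      define Q' where "Q' = (\<lambda>k r s. if k = L then (\<lambda>x. g x * g x * Cf r s x) else (\<lambda>x. Q k r s x * D x))"
      define g' where "g' = (\<lambda>x. g x * D x)"
      have Dp: "D \<in> polyfun F N n" unfolding D_def QM_def
        by (rule pf_det[OF F]) (use Q in auto)
      have Cfp: "Cf r s \<in> polyfun F N n" for r s
        unfolding Cf_def
        by (rule pf_cmul[OF F], rule subf_pow[OF F], rule subf_basic(5)[OF F], rule subf_basic(2)[OF F],
            rule pf_det[OF F]) (use Q in auto)
      have "\<forall>k r s. Q' k r s \<in> polyfun F N n"
        unfolding Q'_def using Q g Dp Cfp by (auto intro!: pf_mul)
      moreover have "g' \<in> polyfun F N n" unfolding g'_def using g Dp by (rule pf_mul)
      moreover have "\<forall>x\<in>coord_space F N n. (g' x \<noteq> 0 \<longleftrightarrow> run n (p @ [ins]) x \<noteq> None) \<and>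
      (\<forall>vs. run n (p @ [ins]) x = Some vs \<longrightarrow> (\<forall>k<length vs. vs!k \<in> carrier_mat n n \<and>
          (\<forall>r<n. \<forall>s<n. (vs!k) $$ (r,s) = Q' k r s x / g' x)))"
      proof
        fix x assume x: "x \<in> coord_space F N n"
        show "(g' x \<noteq> 0 \<longleftrightarrow> run n (p @ [ins]) x \<noteq> None) \<and>
      (\<forall>vs. run n (p @ [ins]) x = Some vs \<longrightarrow> (\<forall>k<length vs. vs!k \<in> carrier_mat n n \<and>
          (\<forall>r<n. \<forall>s<n. (vs!k) $$ (r,s) = Q' k r s x / g' x)))"
        proof (cases "run n p x")
          case None then show ?thesis using R x by (auto simp: run_snoc g'_def)
        next
          case (Some vs)
          have len: "length vs = L" using lenL[OF x Some] .
          have Rv: "\<forall>i<length vs. vs!i \<in> carrier_mat n n \<and>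
              (\<forall>r<n. \<forall>s<n. (vs!i) $$ (r,s) = Q i r s x / g x)" and gx: "g x \<noteq> 0"
            using R x Some by auto
          have ci: "vs ! i \<in> carrier_mat n n" using Rv True len by auto
          have QMc: "QM x \<in> carrier_mat n n" unfolding QM_def by simp
          have vsi: "vs ! i = (1 / g x) \<cdot>\<^sub>m QM x"
            by (rule eq_matI) (use ci Rv True len in \<open>auto simp: QM_def\<close>)
          have detv: "det (vs ! i) = (1 / g x) ^ n * D x"
            unfolding vsi D_def using QMc by simp
          have iff: "(\<exists>B. B \<in> carrier_mat n n \<and> vs ! i * B = 1\<^sub>m n \<and> B * vs ! i = 1\<^sub>m n) \<longleftrightarrow> D x \<noteq> 0"
            unfolding inv_exists_iff[OF ci] detv using gx by simp
          show ?thesis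
          proof (cases "D x = 0")
            case True2: True
            have "run n (p @ [ins]) x = None" using iff True2 True len
              by (simp add: run_snoc Some Inv)
            then show ?thesis using True2 by (simp add: g'_def)
          next
            case False2: False
            define B where "B = (g x / D x) \<cdot>\<^sub>m adj_mat (QM x)"
            have Bc: "B \<in> carrier_mat n n" unfolding B_def using adj_mat(1)[OF QMc] by simp
            have B1: "vs ! i * B = 1\<^sub>m n" unfolding B_def vsi
              by (rule smult_inv_pair[OF QMc adj_mat(1)[OF QMc] adj_mat(2)[OF QMc]])
                (use False2 gx in \<open>simp add: D_def\<close>)
            have B2: "B * vs ! i = 1\<^sub>m n" unfolding B_def vsi
              by (rule smult_inv_pair[OF adj_mat(1)[OF QMc] QMc adj_mat(3)[OF QMc]])
                (use False2 gx in \<open>simp add: D_def\<close>)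
            have run': "run n (p @ [ins]) x = Some (vs @ [B])"
              using True len iff False2 some_inv[OF ci Bc B1 B2] by (simp add: run_snoc Some Inv)
            have ent: "B $$ (r,s) = Q' L r s x / g' x" if "r < n" "s < n" for r s
            proof -
              have md: "mat_delete (QM x) s r = mat (n-1) (n-1) (\<lambda>(a,b). Q i (idx a s) (idx b r) x)"
                by (rule eq_matI) (use that in \<open>auto simp: mat_delete_def QM_def idx_def\<close>)
              have "B $$ (r,s) = g x / D x * Cf r s x"
                unfolding B_def adj_mat_def cofactor_def Cf_def md[symmetric] using that QMc by simp
              then show ?thesis using gx False2 by (simp add: Q'_def g'_def)
            qed
            have old: "Q k r s x / g x = Q' k r s x / g' x" if "k \<noteq> L" for k r s
              using gx False2 that by (simp add: Q'_def g'_def)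
            show ?thesis using gx False2 Rv len ent Bc old unfolding run'
              by (auto simp: g'_def nth_append less_Suc_eq)
          qed
        qed
      qed
      ultimately show ?thesis by blast
    qed
  qed
qed



lemma sum_split2: "(\<Sum>i<(a::nat)+b. f i) = (\<Sum>i<a. f i) + (\<Sum>i<b. f (a+i))"
  by (induction b) (simp_all add: add.assoc)

lemma sum_list_upt_conv: "(\<Sum>l\<leftarrow>[0..<k]. f l) = (\<Sum>l<k. f l)"
  by (simp add: sum_set_upt_conv_sum_list_nat[symmetric] atLeast0LessThan)

lemma swap_lin:
  assumes "\<And>l. l < N1 \<Longrightarrow> u l = (\<Sum>i<N2. M l i * w i)"
  shows "(\<Sum>i<N2. (w i::'a::field) * (\<Sum>l<N1. M l i * X l)) = (\<Sum>l<N1. u l * X l)"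
proof -
  have "(\<Sum>i<N2. w i * (\<Sum>l<N1. M l i * X l)) = (\<Sum>i<N2. \<Sum>l<N1. M l i * w i * X l)"
    by (simp add: sum_distrib_left mult.commute mult.left_commute)
  also have "\<dots> = (\<Sum>l<N1. \<Sum>i<N2. M l i * w i * X l)" by (rule sum.swap)
  also have "\<dots> = (\<Sum>l<N1. u l * X l)"
    by (rule sum.cong[OF refl]) (simp add: assms sum_distrib_right)
  finally show ?thesis .
qed

lemma sum_list_swap: "(\<Sum>i\<in>A. \<Sum>t\<leftarrow>ts. f i t) = (\<Sum>t\<leftarrow>ts. \<Sum>i\<in>A. f i t)"
  by (induction ts) (simp_all add: sum.distrib)

definition vals :: "'b list \<Rightarrow> nat list \<Rightarrow> 'b list" where
  "vals vs idx = map ((!) vs) idx"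

definition extends :: "'b list \<Rightarrow> 'b list \<Rightarrow> bool" where
  "extends vs vs' \<longleftrightarrow> (\<exists>ws. vs' = vs @ ws)"

lemma extends_refl[simp]: "extends vs vs" unfolding extends_def by auto
lemma extends_trans: "extends a b \<Longrightarrow> extends b c \<Longrightarrow> extends a c" unfolding extends_def by auto
lemma extends_len: "extends a b \<Longrightarrow> length a \<le> length b" unfolding extends_def by auto
lemma extends_nth: "extends a b \<Longrightarrow> i < length a \<Longrightarrow> b ! i = a ! i" unfolding extends_def by (auto simp: nth_append)
lemma vals_ext: "extends a b \<Longrightarrow> set idx \<subseteq> {..<length a} \<Longrightarrow> vals b idx = vals a idx"
  unfolding vals_def using extends_nth by (fastforce intro!: map_cong)
lemma length_vals[simp]: "length (vals vs idx) = length idx" by (simp add: vals_def)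
lemma vals_take: "vals vs (take k idx) = take k (vals vs idx)" by (simp add: vals_def take_map)
lemma vals_drop: "vals vs (drop k idx) = drop k (vals vs idx)" by (simp add: vals_def drop_map)
lemma vals_append_new: "length vs = off \<Longrightarrow> vals (vs @ ws) [off..<off + length ws] = ws"
  unfolding vals_def by (auto intro!: nth_equalityI simp: nth_append)

lemma count_mul_append[simp]: "count_mul (p @ q) = count_mul p + count_mul q"
  by (simp add: count_mul_def)
lemma count_inv_append[simp]: "count_inv (p @ q) = count_inv p + count_inv q"
  by (simp add: count_inv_def)
lemma count_lin[simp]: "count_mul (map Lin css) = 0" "count_inv (map Lin css) = 0"
  by (simp_all add: count_mul_def count_inv_def filter_empty_conv)
lemma prog_over_append[simp]: "prog_over F (p @ q) \<longleftrightarrow> prog_over F p \<and> prog_over F q"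
  by (auto simp: prog_over_def)

definition lc :: "nat \<Rightarrow> 'a::field mat list \<Rightarrow> ('a \<times> nat) list \<Rightarrow> 'a mat" where
  "lc n vs cs = mat n n (\<lambda>(r,s). \<Sum>p\<leftarrow>cs. fst p * (vs ! snd p) $$ (r,s))"

lemma lc_append: "\<forall>p\<in>set cs. snd p < length vs \<Longrightarrow> lc n (vs @ ws) cs = lc n vs cs"
  unfolding lc_def by (rule eq_matI) (auto simp: nth_append intro!: arg_cong[where f=sum_list] map_cong)

lemma run_lins:
  "\<forall>cs\<in>set css. \<forall>p\<in>set cs. snd p < length vs \<Longrightarrow> run n (map Lin css) vs = Some (vs @ map (lc n vs) css)"
proof (induction css arbitrary: vs)
  case (Cons cs css)
  have "run n (map Lin (cs # css)) vs = run n (map Lin css) (vs @ [lc n vs cs])"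
    using Cons.prems by (simp add: lc_def)
  also have "\<dots> = Some ((vs @ [lc n vs cs]) @ map (lc n (vs @ [lc n vs cs])) css)"
    by (rule Cons.IH) (use Cons.prems in \<open>fastforce intro: less_SucI\<close>)
  also have "map (lc n (vs @ [lc n vs cs])) css = map (lc n vs) css"
    using Cons.prems by (auto intro!: map_cong lc_append)
  finally show ?case by simp
qed simp

lemma assemble_index: "r < n \<Longrightarrow> s < n \<Longrightarrow> assemble n b Xs $$ (r,s) = (\<Sum>i<length Xs. b i * (Xs ! i) $$ (r,s))"
  by (simp add: assemble_def)
lemma assemble_carrier[simp]: "assemble n b Xs \<in> carrier_mat n n"
  by (simp add: assemble_def)
lemma assemble_dim[simp]: "dim_row (assemble n b Xs) = n" "dim_col (assemble n b Xs) = n"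
  by (simp_all add: assemble_def)

lemma assemble_lin:
  assumes "\<And>l. l < length xs \<Longrightarrow> u l = (\<Sum>i<N2. M l i * w i)"
  shows "assemble n w (map (\<lambda>i. lc n vs (map (\<lambda>l. (M l i, xs ! l)) [0..<length xs])) [0..<N2])
       = assemble n u (vals vs xs)"
proof (rule eq_matI)
  fix r s assume rs: "r < dim_row (assemble n u (vals vs xs))" "s < dim_col (assemble n u (vals vs xs))"
  hence r: "r < n" and s: "s < n" by auto
  show "assemble n w (map (\<lambda>i. lc n vs (map (\<lambda>l. (M l i, xs ! l)) [0..<length xs])) [0..<N2]) $$ (r, s) =
        assemble n u (vals vs xs) $$ (r, s)"
    using r s
    by (simp add: assemble_index lc_def vals_def sum_list_upt_conv o_def swap_lin[OF assms])
qed auto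



definition lterm :: "(nat \<Rightarrow> nat \<Rightarrow> 'a) \<Rightarrow> nat list \<Rightarrow> nat \<Rightarrow> ('a \<times> nat) list" where
  "lterm M blk i = map (\<lambda>l. (M l i, blk ! l)) [0..<length blk]"

lemma sum_list_map_concat: "sum_list (map f (concat xss)) = sum_list (map (\<lambda>xs. sum_list (map f xs)) xss)"
  by (induction xss) auto

locale tower =
  fixes K :: "nat \<Rightarrow> 'a::field set" and m n :: nat and xi pp qq :: "nat \<Rightarrow> 'a"
  assumes subf: "\<And>j. j \<le> m \<Longrightarrow> is_subfield (K j)"
    and Kmono: "\<And>j. j < m \<Longrightarrow> K j \<subseteq> K (Suc j)"
    and xi_in: "\<And>j. j < m \<Longrightarrow> xi (Suc j) \<in> K (Suc j)"
    and xi_notin: "\<And>j. j < m \<Longrightarrow> xi (Suc j) \<notin> K j"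
    and pp_in: "\<And>j. j < m \<Longrightarrow> pp (Suc j) \<in> K j"
    and qq_in: "\<And>j. j < m \<Longrightarrow> qq (Suc j) \<in> K j"
    and xi_eq: "\<And>j. j < m \<Longrightarrow> xi (Suc j) * xi (Suc j) + pp (Suc j) * xi (Suc j) + qq (Suc j) = 0"
    and span2: "\<And>j x. j < m \<Longrightarrow> x \<in> K (Suc j) \<Longrightarrow> \<exists>a c. a \<in> K j \<and> c \<in> K j \<and> x = a + c * xi (Suc j)"
begin

primrec beta :: "nat \<Rightarrow> 'a list" where
  "beta 0 = [1]"
| "beta (Suc j) = beta j @ map (\<lambda>y. xi (Suc j) * y) (beta j)"

lemma length_beta[simp]: "length (beta j) = 2 ^ j"
  by (induction j) auto

lemma K0_sub: "j \<le> m \<Longrightarrow> K 0 \<subseteq> K j"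
proof (induction j)
  case (Suc j) then show ?case using Kmono[of j] by auto
qed simp

lemma beta_in: "j \<le> m \<Longrightarrow> set (beta j) \<subseteq> K j"
proof (induction j)
  case 0 then show ?case using subf_basic(2)[OF subf[of 0]] by simp
next
  case (Suc j)
  have "set (beta j) \<subseteq> K (Suc j)" using Suc Kmono[of j] by auto
  moreover have "xi (Suc j) * y \<in> K (Suc j)" if "y \<in> set (beta j)" for y
    using subf_basic(4)[OF subf[OF Suc.prems] xi_in[of j]] Suc that Kmono[of j] by auto
  ultimately show ?case by auto
qed

lemma beta_nth_in: "j \<le> m \<Longrightarrow> i < 2 ^ j \<Longrightarrow> beta j ! i \<in> K j"
  using beta_in[of j] nth_mem[of i "beta j"] by auto

lemma beta_Suc_nth:
  "i < 2 ^ j \<Longrightarrow> beta (Suc j) ! i = beta j ! i"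
  "i < 2 ^ j \<Longrightarrow> beta (Suc j) ! (2 ^ j + i) = xi (Suc j) * beta j ! i"
  by (auto simp: nth_append)

lemma beta_span: "j \<le> m \<Longrightarrow> x \<in> K j \<Longrightarrow> \<exists>d. (\<forall>i. d i \<in> K 0) \<and> x = (\<Sum>i<2^j. d i * beta j ! i)"
proof (induction j arbitrary: x)
  case 0
  then show ?case using subf_basic(1)[OF subf[of 0]]
    by (intro exI[of _ "\<lambda>i. if i = 0 then x else 0"]) auto
next
  case (Suc j)
  obtain a c where ac: "a \<in> K j" "c \<in> K j" "x = a + c * xi (Suc j)" using span2[of j x] Suc by auto
  obtain da where da: "\<forall>i. da i \<in> K 0" "a = (\<Sum>i<2^j. da i * beta j ! i)" using Suc ac by force
  obtain dc where dc: "\<forall>i. dc i \<in> K 0" "c = (\<Sum>i<2^j. dc i * beta j ! i)" using Suc ac by force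
  define d where "d = (\<lambda>i. if i < 2^j then da i else dc (i - 2^j))"
  have "(\<Sum>i<2^Suc j. d i * beta (Suc j) ! i) = (\<Sum>i<2^j. d i * beta (Suc j) ! i) + (\<Sum>i<2^j. d (2^j + i) * beta (Suc j) ! (2^j + i))"
    using sum_split2[of "\<lambda>i. d i * beta (Suc j) ! i" "2^j" "2^j"] by (simp add: mult_2)
  also have "(\<Sum>i<2^j. d i * beta (Suc j) ! i) = (\<Sum>i<2^j. da i * beta j ! i)"
    by (intro sum.cong refl) (simp add: d_def beta_Suc_nth del: beta.simps)
  also have "(\<Sum>i<2^j. d (2^j + i) * beta (Suc j) ! (2^j + i)) = (\<Sum>i<2^j. dc i * beta j ! i) * xi (Suc j)"
    by (simp add: sum_distrib_right del: beta.simps, intro sum.cong refl) (simp add: d_def beta_Suc_nth del: beta.simps)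
  also have "(\<Sum>i<2^j. da i * beta j ! i) + (\<Sum>i<2^j. dc i * beta j ! i) * xi (Suc j) = a + c * xi (Suc j)"
    using da dc by simp
  finally show ?case using da dc ac by (intro exI[of _ d]) (auto simp: d_def)
qed

definition G :: "nat \<Rightarrow> 'a \<Rightarrow> nat \<Rightarrow> nat \<Rightarrow> 'a" where
  "G j c l = (if \<exists>d. (\<forall>i. d i \<in> K 0) \<and> c * beta j ! l = (\<Sum>i<2^j. d i * beta j ! i)
     then SOME d. (\<forall>i. d i \<in> K 0) \<and> c * beta j ! l = (\<Sum>i<2^j. d i * beta j ! i) else (\<lambda>_. 0))"

lemma G_in: "G j c l i \<in> K 0"
proof -
  let ?P = "\<lambda>d. (\<forall>i. d i \<in> K 0) \<and> c * beta j ! l = (\<Sum>i<2^j. d i * beta j ! i)"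
  show ?thesis
  proof (cases "\<exists>d. ?P d")
    case True then show ?thesis unfolding G_def using someI_ex[OF True] by auto
  next
    case False then show ?thesis unfolding G_def using subf_basic(1)[OF subf[of 0]] by auto
  qed
qed

lemma G_eq: assumes "j \<le> m" "c \<in> K j" "l < 2 ^ j"
  shows "c * beta j ! l = (\<Sum>i<2^j. G j c l i * beta j ! i)"
proof -
  let ?P = "\<lambda>d. (\<forall>i. d i \<in> K 0) \<and> c * beta j ! l = (\<Sum>i<2^j. d i * beta j ! i)"
  have "c * beta j ! l \<in> K j" using subf_basic(4)[OF subf[OF assms(1)] assms(2) beta_nth_in[OF assms(1,3)]] .
  then have ex: "\<exists>d. ?P d" using beta_span[OF assms(1)] by blast
  show ?thesis unfolding G_def using someI_ex[OF ex] ex by auto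
qed

definition asm :: "nat \<Rightarrow> 'a mat list \<Rightarrow> 'a mat" where
  "asm j Zs = assemble n (\<lambda>i. beta j ! i) Zs"

lemma asm_carrier[simp]: "asm j Zs \<in> carrier_mat n n"
  by (simp add: asm_def)

lemma asm_split:
  assumes "length Z = 2 ^ Suc j"
  shows "asm (Suc j) Z = asm j (take (2^j) Z) + xi (Suc j) \<cdot>\<^sub>m asm j (drop (2^j) Z)"
proof (rule eq_matI)
  fix r s assume "r < dim_row (asm j (take (2^j) Z) + xi (Suc j) \<cdot>\<^sub>m asm j (drop (2^j) Z))"
    "s < dim_col (asm j (take (2^j) Z) + xi (Suc j) \<cdot>\<^sub>m asm j (drop (2^j) Z))"
  hence r: "r < n" and s: "s < n" by (auto simp: asm_def)
  have "asm (Suc j) Z $$ (r,s) = (\<Sum>i<2^j + 2^j. beta (Suc j) ! i * (Z ! i) $$ (r,s))"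
    using r s assms by (simp add: asm_def assemble_index mult_2)
  also have "\<dots> = (\<Sum>i<2^j. beta (Suc j) ! i * (Z ! i) $$ (r,s)) + (\<Sum>i<2^j. beta (Suc j) ! (2^j + i) * (Z ! (2^j + i)) $$ (r,s))"
    by (rule sum_split2)
  also have "(\<Sum>i<2^j. beta (Suc j) ! i * (Z ! i) $$ (r,s)) = asm j (take (2^j) Z) $$ (r,s)"
    using r s assms by (simp add: asm_def assemble_index del: beta.simps, intro sum.cong refl)
      (simp add: beta_Suc_nth del: beta.simps)
  also have "(\<Sum>i<2^j. beta (Suc j) ! (2^j + i) * (Z ! (2^j + i)) $$ (r,s)) = xi (Suc j) * asm j (drop (2^j) Z) $$ (r,s)"
    using r s assms by (simp add: asm_def assemble_index sum_distrib_left del: beta.simps, intro sum.cong refl)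
      (simp add: beta_Suc_nth mult.assoc del: beta.simps)
  finally show "asm (Suc j) Z $$ (r,s) = (asm j (take (2^j) Z) + xi (Suc j) \<cdot>\<^sub>m asm j (drop (2^j) Z)) $$ (r,s)"
    using r s by (simp add: asm_def)
qed (auto simp: asm_def)

definition ok :: "'a mat list \<Rightarrow> bool" where
  "ok vs \<longleftrightarrow> (\<forall>v\<in>set vs. v \<in> carrier_mat n n \<and> (\<forall>r<n. \<forall>s<n. v $$ (r,s) \<in> K 0))"

lemma ok_append[simp]: "ok (vs @ ws) \<longleftrightarrow> ok vs \<and> ok ws"
  unfolding ok_def by auto

lemma ok_nth: "ok vs \<Longrightarrow> i < length vs \<Longrightarrow> vs ! i \<in> carrier_mat n n \<and> (\<forall>r<n. \<forall>s<n. (vs ! i) $$ (r,s) \<in> K 0)"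
  unfolding ok_def by auto

lemma ok_vals: "ok vs \<Longrightarrow> set idx \<subseteq> {..<length vs} \<Longrightarrow> ok (vals vs idx)"
  unfolding ok_def vals_def by auto

lemma lc_ok: assumes "ok vs" "\<forall>p\<in>set cs. fst p \<in> K 0 \<and> snd p < length vs"
  shows "ok [lc n vs cs]"
  unfolding ok_def lc_def
  using assms ok_nth[OF assms(1)]
  by (auto intro!: subf_sum_list[OF subf[of 0]] subf_basic(4)[OF subf[of 0]])

lemma asm_entry_in: assumes "j \<le> m" "ok Z" "length Z = 2 ^ j" "r < n" "s < n"
  shows "asm j Z $$ (r,s) \<in> K j"
  unfolding asm_def assemble_index[OF assms(4,5)]
  using assms ok_nth[OF assms(2)] beta_nth_in[OF assms(1)] K0_sub[OF assms(1)]
  by (auto intro!: subf_sum[OF subf[OF assms(1)]] subf_basic(4)[OF subf[OF assms(1)]])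

definition lcomb :: "nat \<Rightarrow> ('a \<times> nat list) list \<Rightarrow> nat \<Rightarrow> ('a \<times> nat) list" where
  "lcomb j ts i = concat (map (\<lambda>(c,blk). lterm (G j c) blk i) ts)"

definition lblock :: "nat \<Rightarrow> ('a \<times> nat list) list \<Rightarrow> 'a instr list" where
  "lblock j ts = map (\<lambda>i. Lin (lcomb j ts i)) [0..<2^j]"

definition lbvals :: "nat \<Rightarrow> ('a \<times> nat list) list \<Rightarrow> 'a mat list \<Rightarrow> 'a mat list" where
  "lbvals j ts vs = map (\<lambda>i. lc n vs (lcomb j ts i)) [0..<2^j]"

lemma lblock_len[simp]: "length (lblock j ts) = 2 ^ j" by (simp add: lblock_def)
lemma lbvals_len[simp]: "length (lbvals j ts vs) = 2 ^ j" by (simp add: lbvals_def)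
lemma lblock_counts[simp]: "count_mul (lblock j ts) = 0" "count_inv (lblock j ts) = 0"
  by (simp_all add: lblock_def count_mul_def count_inv_def filter_empty_conv)
lemma lblock_over: "prog_over (K 0) (lblock j ts)"
  by (auto simp: lblock_def prog_over_def lcomb_def lterm_def G_in)

lemma lcomb_set:
  assumes "p \<in> set (lcomb j ts i)"
  shows "fst p \<in> K 0 \<and> (\<exists>t\<in>set ts. snd p \<in> set (snd t))"
proof -
  from assms obtain c blk l where cb: "(c,blk) \<in> set ts" "l < length blk" "p = (G j c l i, blk ! l)"
    by (auto simp: lcomb_def lterm_def)
  have "blk ! l \<in> set blk" using cb(2) by simp
  then show ?thesis using cb G_in by (intro conjI bexI[of _ "(c,blk)"]) auto
qed

lemma lblock_run:
  assumes "\<forall>t\<in>set ts. set (snd t) \<subseteq> {..<length vs}" "ok vs"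
  shows "run n (lblock j ts) vs = Some (vs @ lbvals j ts vs) \<and> ok (vs @ lbvals j ts vs)"
proof -
  have pr: "fst p \<in> K 0 \<and> snd p < length vs" if P: "p \<in> set (lcomb j ts i)" for p i
  proof -
    obtain t where "t \<in> set ts" "snd p \<in> set (snd t)" "fst p \<in> K 0" using lcomb_set[OF P] by blast
    then show ?thesis using assms(1) by blast
  qed
  have "\<forall>cs\<in>set (map (lcomb j ts) [0..<2^j]). \<forall>p\<in>set cs. snd p < length vs"
    using pr by auto
  then have "run n (lblock j ts) vs = Some (vs @ lbvals j ts vs)"
    using run_lins[of "map (lcomb j ts) [0..<2^j]" vs n] by (simp add: lblock_def lbvals_def o_def)
  moreover have "ok (lbvals j ts vs)"
  proof -
    have "ok [lc n vs (lcomb j ts i)]" for i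
      by (rule lc_ok[OF assms(2)]) (use pr in blast)
    then show ?thesis unfolding lbvals_def ok_def by auto
  qed
  ultimately show ?thesis using assms by simp
qed

lemma lblock_asm:
  assumes j: "j \<le> m" and ts: "\<forall>t\<in>set ts. fst t \<in> K j \<and> length (snd t) = 2 ^ j"
  shows "asm j (lbvals j ts vs) = mat n n (\<lambda>(r,s). \<Sum>t\<leftarrow>ts. fst t * asm j (vals vs (snd t)) $$ (r,s))"
proof (rule eq_matI)
  fix r s assume "r < dim_row (mat n n (\<lambda>(r,s). \<Sum>t\<leftarrow>ts. fst t * asm j (vals vs (snd t)) $$ (r,s)))"
    "s < dim_col (mat n n (\<lambda>(r,s). \<Sum>t\<leftarrow>ts. fst t * asm j (vals vs (snd t)) $$ (r,s)))"
  hence r: "r < n" and s: "s < n" by auto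
  have ent: "lc n vs (lcomb j ts i) $$ (r,s) = (\<Sum>t\<leftarrow>ts. \<Sum>l<2^j. G j (fst t) l i * (vs ! (snd t ! l)) $$ (r,s))" for i
  proof -
    have "lc n vs (lcomb j ts i) $$ (r,s) = (\<Sum>t\<leftarrow>ts. \<Sum>p\<leftarrow>lterm (G j (fst t)) (snd t) i. fst p * (vs ! snd p) $$ (r,s))"
      using r s by (simp add: lc_def lcomb_def sum_list_map_concat o_def case_prod_beta)
    also have "\<dots> = (\<Sum>t\<leftarrow>ts. \<Sum>l<2^j. G j (fst t) l i * (vs ! (snd t ! l)) $$ (r,s))"
      by (rule arg_cong[where f=sum_list], rule map_cong[OF refl])
        (use ts in \<open>simp add: lterm_def o_def sum_list_upt_conv\<close>)
    finally show ?thesis .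
  qed
  have "asm j (lbvals j ts vs) $$ (r,s) = (\<Sum>i<2^j. beta j ! i * (\<Sum>t\<leftarrow>ts. \<Sum>l<2^j. G j (fst t) l i * (vs ! (snd t ! l)) $$ (r,s)))"
    using r s by (simp add: asm_def assemble_index lbvals_def ent)
  also have "\<dots> = (\<Sum>i<2^j. \<Sum>t\<leftarrow>ts. beta j ! i * (\<Sum>l<2^j. G j (fst t) l i * (vs ! (snd t ! l)) $$ (r,s)))"
    by (simp add: sum_list_const_mult)
  also have "\<dots> = (\<Sum>t\<leftarrow>ts. \<Sum>i<2^j. beta j ! i * (\<Sum>l<2^j. G j (fst t) l i * (vs ! (snd t ! l)) $$ (r,s)))"
    by (rule sum_list_swap)
  also have "\<dots> = (\<Sum>t\<leftarrow>ts. \<Sum>l<2^j. (fst t * beta j ! l) * (vs ! (snd t ! l)) $$ (r,s))"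
  proof (rule arg_cong[where f=sum_list], rule map_cong[OF refl])
    fix t assume t: "t \<in> set ts"
    show "(\<Sum>i<2^j. beta j ! i * (\<Sum>l<2^j. G j (fst t) l i * (vs ! (snd t ! l)) $$ (r,s))) =
          (\<Sum>l<2^j. (fst t * beta j ! l) * (vs ! (snd t ! l)) $$ (r,s))"
      by (rule swap_lin) (use G_eq[OF j] ts t in auto)
  qed
  also have "\<dots> = (\<Sum>t\<leftarrow>ts. fst t * asm j (vals vs (snd t)) $$ (r,s))"
    by (rule arg_cong[where f=sum_list], rule map_cong[OF refl])
      (use r s ts in \<open>simp add: asm_def assemble_index vals_def sum_distrib_left mult_ac\<close>)
  finally show "asm j (lbvals j ts vs) $$ (r,s) = mat n n (\<lambda>(r,s). \<Sum>t\<leftarrow>ts. fst t * asm j (vals vs (snd t)) $$ (r,s)) $$ (r,s)"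
    using r s by simp
qed (auto simp: asm_def)

end


lemma bilin4: "(\<Sum>k\<in>S. (a k + x*b k)*(c k + x*d k)) =
   (\<Sum>k\<in>S. a k*c k) + x*(\<Sum>k\<in>S. a k*d k) + x*(\<Sum>k\<in>S. b k*c k) + (x*x)*(\<Sum>k\<in>S. b k*d k :: 'a::field)"
proof -
  have "(\<Sum>k\<in>S. (a k + x*b k)*(c k + x*d k)) = (\<Sum>k\<in>S. a k*c k + x*(a k*d k) + x*(b k*c k) + (x*x)*(b k*d k))"
    by (rule sum.cong) (simp_all add: algebra_simps)
  also have "\<dots> = (\<Sum>k\<in>S. a k*c k) + x*(\<Sum>k\<in>S. a k*d k) + x*(\<Sum>k\<in>S. b k*c k) + (x*x)*(\<Sum>k\<in>S. b k*d k)"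
    by (simp add: sum.distrib sum_distrib_left)
  finally show ?thesis .
qed

lemma bilin2: "(\<Sum>k\<in>S. (a k + b k)*(c k + d k)) =
   (\<Sum>k\<in>S. a k*c k) + (\<Sum>k\<in>S. a k*d k) + (\<Sum>k\<in>S. b k*c k) + (\<Sum>k\<in>S. b k*d k :: 'a::field)"
proof -
  have "(\<Sum>k\<in>S. (a k + b k)*(c k + d k)) = (\<Sum>k\<in>S. a k*c k + a k*d k + b k*c k + b k*d k)"
    by (rule sum.cong) (simp_all add: algebra_simps)
  also have "\<dots> = (\<Sum>k\<in>S. a k*c k) + (\<Sum>k\<in>S. a k*d k) + (\<Sum>k\<in>S. b k*c k) + (\<Sum>k\<in>S. b k*d k)"
    by (simp add: sum.distrib)
  finally show ?thesis .
qed

lemma kara_scal: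
  assumes "x*x + p*x + q = (0::'a::field)"
  shows "sac + x*sad + x*sbc + (x*x)*sbd = sac - q*sbd + x*((sac+sad+sbc+sbd) - sac - (1+p)*sbd)"
proof -
  have "(sac + x*sad + x*sbc + (x*x)*sbd) - (sac - q*sbd + x*((sac+sad+sbc+sbd) - sac - (1+p)*sbd))
     = sbd * (x*x + p*x + q)" by (simp add: algebra_simps)
  then have "(sac + x*sad + x*sbc + (x*x)*sbd) - (sac - q*sbd + x*((sac+sad+sbc+sbd) - sac - (1+p)*sbd)) = 0"
    using assms by simp
  then show ?thesis by (simp only: right_minus_eq)
qed

lemma kara_id:
  fixes A B C D :: "'a::field mat"
  assumes A: "A \<in> carrier_mat n n" and B: "B \<in> carrier_mat n n" and C: "C \<in> carrier_mat n n" and D: "D \<in> carrier_mat n n"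
    and x: "x*x + p*x + q = 0"
  shows "(A + x \<cdot>\<^sub>m B) * (C + x \<cdot>\<^sub>m D) =
    mat n n (\<lambda>(r,s). (A*C)$$(r,s) - q * (B*D)$$(r,s)) +
    x \<cdot>\<^sub>m mat n n (\<lambda>(r,s). (mat n n (\<lambda>(r,s). A$$(r,s) + B$$(r,s)) * mat n n (\<lambda>(r,s). C$$(r,s) + D$$(r,s)))$$(r,s)
         - (A*C)$$(r,s) - (1+p) * (B*D)$$(r,s))"
proof (rule eq_matI)
  fix r s assume "r < dim_row (mat n n (\<lambda>(r,s). (A*C)$$(r,s) - q * (B*D)$$(r,s)) +
    x \<cdot>\<^sub>m mat n n (\<lambda>(r,s). (mat n n (\<lambda>(r,s). A$$(r,s) + B$$(r,s)) * mat n n (\<lambda>(r,s). C$$(r,s) + D$$(r,s)))$$(r,s)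
         - (A*C)$$(r,s) - (1+p) * (B*D)$$(r,s)))"
   "s < dim_col (mat n n (\<lambda>(r,s). (A*C)$$(r,s) - q * (B*D)$$(r,s)) +
    x \<cdot>\<^sub>m mat n n (\<lambda>(r,s). (mat n n (\<lambda>(r,s). A$$(r,s) + B$$(r,s)) * mat n n (\<lambda>(r,s). C$$(r,s) + D$$(r,s)))$$(r,s)
         - (A*C)$$(r,s) - (1+p) * (B*D)$$(r,s)))"
  hence r: "r < n" and s: "s < n" by auto
  have e1: "((A + x \<cdot>\<^sub>m B) * (C + x \<cdot>\<^sub>m D)) $$ (r,s) =
     (\<Sum>k\<in>{0..<n}. (A$$(r,k) + x * B$$(r,k)) * (C$$(k,s) + x * D$$(k,s)))"
    using A B C D r s by (simp add: scalar_prod_def)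
  have e2: "(mat n n (\<lambda>(r,s). A$$(r,s) + B$$(r,s)) * mat n n (\<lambda>(r,s). C$$(r,s) + D$$(r,s)))$$(r,s) =
     (\<Sum>k\<in>{0..<n}. (A$$(r,k) + B$$(r,k)) * (C$$(k,s) + D$$(k,s)))"
    using r s by (simp add: scalar_prod_def)
  have e3: "(A*C)$$(r,s) = (\<Sum>k\<in>{0..<n}. A$$(r,k) * C$$(k,s))" "(B*D)$$(r,s) = (\<Sum>k\<in>{0..<n}. B$$(r,k) * D$$(k,s))"
    using A B C D r s by (simp_all add: scalar_prod_def)
  show "((A + x \<cdot>\<^sub>m B) * (C + x \<cdot>\<^sub>m D)) $$ (r,s) = (mat n n (\<lambda>(r,s). (A*C)$$(r,s) - q * (B*D)$$(r,s)) +
    x \<cdot>\<^sub>m mat n n (\<lambda>(r,s). (mat n n (\<lambda>(r,s). A$$(r,s) + B$$(r,s)) * mat n n (\<lambda>(r,s). C$$(r,s) + D$$(r,s)))$$(r,s)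
         - (A*C)$$(r,s) - (1+p) * (B*D)$$(r,s))) $$ (r,s)"
    using r s unfolding e1
    apply (simp only: index_add_mat index_smult_mat index_mat dim_row_mat dim_col_mat split)
    apply (simp only: e2 e3 bilin4 bilin2)
    apply (rule kara_scal[OF x])
    done
qed (use A B C D in auto)

fun klen :: "nat \<Rightarrow> nat" where
  "klen 0 = 1"
| "klen (Suc j) = 3 * klen j + 4 * 2 ^ j"

lemma klen_ge: "2 ^ j \<le> klen j"
  by (induction j) auto

definition kouts :: "nat \<Rightarrow> nat \<Rightarrow> nat list" where
  "kouts j off = [off + klen j - 2 ^ j..<off + klen j]"

lemma kouts_len[simp]: "length (kouts j off) = 2 ^ j"
  using klen_ge[of j] by (simp add: kouts_def)

lemma kouts_set: "set (kouts j off) \<subseteq> {..<off + klen j}"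
  by (auto simp: kouts_def)

context tower begin

fun kprog :: "nat \<Rightarrow> nat \<Rightarrow> nat list \<Rightarrow> nat list \<Rightarrow> 'a instr list" where
  "kprog 0 off xs ys = [Mul (xs ! 0) (ys ! 0)]"
| "kprog (Suc j) off xs ys = (let h = 2 ^ j; o1 = off + klen j; o2 = o1 + klen j; o3 = o2 + h; o4 = o3 + h in
     kprog j off (take h xs) (take h ys) @ kprog j o1 (drop h xs) (drop h ys) @
     lblock j [(1, take h xs), (1, drop h xs)] @ lblock j [(1, take h ys), (1, drop h ys)] @
     kprog j o4 [o2..<o3] [o3..<o4] @
     lblock j [(1, kouts j off), (- qq (Suc j), kouts j o1)] @
     lblock j [(1, kouts j o4), (-1, kouts j off), (-1 - pp (Suc j), kouts j o1)])"

lemma kprog_len[simp]: "length (kprog j off xs ys) = klen j"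
  by (induction j arbitrary: off xs ys) (simp_all add: Let_def)

lemma kprog_counts: "count_mul (kprog j off xs ys) = 3 ^ j \<and> count_inv (kprog j off xs ys) = 0"
proof (induction j arbitrary: off xs ys)
  case 0 show ?case by (simp add: count_mul_def count_inv_def)
next
  case (Suc j) then show ?case by (simp add: Let_def)
qed

lemma kprog_over: "prog_over (K 0) (kprog j off xs ys)"
proof (induction j arbitrary: off xs ys)
  case 0 show ?case by (simp add: prog_over_def)
next
  case (Suc j) then show ?case by (simp add: Let_def lblock_over)
qed

lemma asm0: "M \<in> carrier_mat n n \<Longrightarrow> asm 0 [M] = M"
  by (rule eq_matI) (auto simp: asm_def assemble_index)

lemma ok_mult: "ok [A] \<Longrightarrow> ok [B] \<Longrightarrow> ok [A * B]"
  unfolding ok_def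
  by (auto simp: scalar_prod_def intro!: subf_sum[OF subf[of 0]] subf_basic(4)[OF subf[of 0]])

end


context tower begin

lemma K_one: "j \<le> m \<Longrightarrow> 1 \<in> K j" using subf_basic(2)[OF subf] .
lemma K_neg: "j \<le> m \<Longrightarrow> x \<in> K j \<Longrightarrow> - x \<in> K j" using subf_basic(5)[OF subf] .
lemma K_diff: "j \<le> m \<Longrightarrow> x \<in> K j \<Longrightarrow> y \<in> K j \<Longrightarrow> x - y \<in> K j" using subf_diff[OF subf] .

lemma kmul_sem:
  assumes "j \<le> m" "ok vs" "length vs = off" "length xs = 2^j" "length ys = 2^j"
    "set xs \<subseteq> {..<off}" "set ys \<subseteq> {..<off}"
  shows "\<exists>vs'. run n (kprog j off xs ys) vs = Some vs' \<and> extends vs vs' \<and> length vs' = off + klen j \<and> ok vs' \<and>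
     asm j (vals vs' (kouts j off)) = asm j (vals vs xs) * asm j (vals vs ys)"
  using assms
proof (induction j arbitrary: off xs ys vs)
  case 0
  have x0: "xs ! 0 < off" "ys ! 0 < off" using 0 by (auto simp: set_conv_nth)
  let ?v = "vs ! (xs!0) * vs ! (ys!0)"
  have okx: "ok [vs ! (xs!0)]" "ok [vs ! (ys!0)]" using ok_nth[OF 0(2)] x0 0(3) by (auto simp: ok_def)
  have cx: "vs ! (xs!0) \<in> carrier_mat n n" "vs ! (ys!0) \<in> carrier_mat n n" using okx by (auto simp: ok_def)
  have run: "run n (kprog 0 off xs ys) vs = Some (vs @ [?v])" using x0 0(3) by simp
  have xs: "xs = [xs!0]" "ys = [ys!0]" using 0(4,5) by (auto intro: nth_equalityI)
  have "vals (vs @ [?v]) (kouts 0 off) = [?v]" using 0(3) by (simp add: kouts_def vals_def nth_append)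
  moreover have "vals vs xs = [vs ! (xs!0)]" "vals vs ys = [vs ! (ys!0)]"
    by (subst xs, simp add: vals_def)+
  ultimately show ?case using run 0(2,3) ok_mult[OF okx] cx
    by (intro exI[of _ "vs @ [?v]"]) (auto simp: asm0 extends_def)
next
  case (Suc j)
  have j: "j \<le> m" "j < m" using Suc.prems by auto
  let ?h = "2 ^ j :: nat"
  let ?a = "take ?h xs" and ?b = "drop ?h xs" and ?c = "take ?h ys" and ?d = "drop ?h ys"
  let ?o1 = "off + klen j"
  let ?o2 = "off + klen j + klen j"
  let ?o3 = "off + klen j + klen j + ?h"
  let ?o4 = "off + klen j + klen j + ?h + ?h"
  have lens: "length ?a = ?h" "length ?b = ?h" "length ?c = ?h" "length ?d = ?h" using Suc.prems by auto
  have sets: "set ?a \<subseteq> {..<off}" "set ?b \<subseteq> {..<off}" "set ?c \<subseteq> {..<off}" "set ?d \<subseteq> {..<off}"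
    using Suc.prems(6,7) set_take_subset[of ?h xs] set_drop_subset[of ?h xs]
      set_take_subset[of ?h ys] set_drop_subset[of ?h ys] by auto
  define A where "A = asm j (vals vs ?a)"
  define B where "B = asm j (vals vs ?b)"
  define C where "C = asm j (vals vs ?c)"
  define D where "D = asm j (vals vs ?d)"
  obtain vs1 where R1: "run n (kprog j off ?a ?c) vs = Some vs1" and E1: "extends vs vs1"
    and L1: "length vs1 = ?o1" and O1: "ok vs1" and M1: "asm j (vals vs1 (kouts j off)) = A * C"
    using Suc.IH[OF j(1) Suc.prems(2,3) lens(1,3) sets(1,3)] unfolding A_def C_def by blast
  have sets1: "set ?b \<subseteq> {..<?o1}" "set ?d \<subseteq> {..<?o1}" using sets by auto
  obtain vs2 where R2: "run n (kprog j ?o1 ?b ?d) vs1 = Some vs2" and E2: "extends vs1 vs2"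
    and L2: "length vs2 = ?o2" and O2: "ok vs2" and M2: "asm j (vals vs2 (kouts j ?o1)) = B * D"
    using Suc.IH[OF j(1) O1 L1 lens(2,4) sets1]
      vals_ext[OF E1, of ?b] vals_ext[OF E1, of ?d] sets Suc.prems(3) unfolding B_def D_def by auto
  have E02: "extends vs vs2" using E1 E2 extends_trans by blast
  define ts3 where "ts3 = [(1::'a, ?a), (1, ?b)]"
  define L3 where "L3 = lbvals j ts3 vs2"
  have "\<forall>t\<in>set ts3. set (snd t) \<subseteq> {..<length vs2}" using sets L2 unfolding ts3_def by fastforce
  from lblock_run[OF this O2, of j]
  have R3: "run n (lblock j ts3) vs2 = Some (vs2 @ L3)" and O3: "ok (vs2 @ L3)"
    unfolding L3_def by auto
  have A3: "asm j L3 = mat n n (\<lambda>(r,s). A $$ (r,s) + B $$ (r,s))"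
    unfolding L3_def
    by (subst lblock_asm[OF j(1)]) (use lens K_one[OF j(1)] vals_ext[OF E02] sets Suc.prems(3) in
        \<open>auto simp: ts3_def A_def B_def\<close>)
  define ts4 where "ts4 = [(1::'a, ?c), (1, ?d)]"
  define L4 where "L4 = lbvals j ts4 (vs2 @ L3)"
  have "\<forall>t\<in>set ts4. set (snd t) \<subseteq> {..<length (vs2 @ L3)}" using sets L2 unfolding ts4_def by fastforce
  from lblock_run[OF this O3, of j]
  have R4: "run n (lblock j ts4) (vs2 @ L3) = Some (vs2 @ L3 @ L4)" and O4: "ok (vs2 @ L3 @ L4)"
    unfolding L4_def by auto
  have E04: "extends vs (vs2 @ L3)" using E02 extends_trans by (auto simp: extends_def)
  have A4: "asm j L4 = mat n n (\<lambda>(r,s). C $$ (r,s) + D $$ (r,s))"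
    unfolding L4_def
    by (subst lblock_asm[OF j(1)]) (use lens K_one[OF j(1)] vals_ext[OF E04] sets Suc.prems(3) in
        \<open>auto simp: ts4_def C_def D_def\<close>)
  have ex34: "extends (vs2 @ L3) (vs2 @ L3 @ L4)" by (simp add: extends_def)
  have "vals (vs2 @ L3 @ L4) [?o2..<?o3] = vals (vs2 @ L3) [?o2..<?o3]"
    by (rule vals_ext[OF ex34]) (use L2 in \<open>auto simp: L3_def\<close>)
  also have "\<dots> = L3" using vals_append_new[of vs2 ?o2 L3] L2 by (simp add: L3_def)
  finally have v3: "vals (vs2 @ L3 @ L4) [?o2..<?o3] = L3" .
  have v4: "vals (vs2 @ L3 @ L4) [?o3..<?o4] = L4"
    using vals_append_new[of "vs2 @ L3" ?o3 L4] L2 by (simp add: L3_def L4_def)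
  have len4: "length (vs2 @ L3 @ L4) = ?o4" using L2 by (simp add: L3_def L4_def)
  have "\<exists>vs'. run n (kprog j ?o4 [?o2..<?o3] [?o3..<?o4]) (vs2 @ L3 @ L4) = Some vs' \<and>
     extends (vs2 @ L3 @ L4) vs' \<and> length vs' = ?o4 + klen j \<and> ok vs' \<and>
     asm j (vals vs' (kouts j ?o4)) = asm j (vals (vs2 @ L3 @ L4) [?o2..<?o3]) * asm j (vals (vs2 @ L3 @ L4) [?o3..<?o4])"
    by (rule Suc.IH[OF j(1) O4 len4]) auto
  then obtain vs5 where R5: "run n (kprog j ?o4 [?o2..<?o3] [?o3..<?o4]) (vs2 @ L3 @ L4) = Some vs5"
    and E5: "extends (vs2 @ L3 @ L4) vs5"
    and L5: "length vs5 = ?o4 + klen j" and O5: "ok vs5"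
    and M5: "asm j (vals vs5 (kouts j ?o4)) = asm j L3 * asm j L4"
    unfolding v3 v4 by blast
  have E15: "extends vs1 vs5" using E2 E5 by (auto simp: extends_def)
  have E25: "extends vs2 vs5" using E5 by (auto simp: extends_def)
  have k1: "vals vs5 (kouts j off) = vals vs1 (kouts j off)"
    by (rule vals_ext[OF E15]) (use kouts_set L1 in auto)
  have k2: "vals vs5 (kouts j ?o1) = vals vs2 (kouts j ?o1)"
    by (rule vals_ext[OF E25]) (use kouts_set[of j ?o1] L2 in auto)
  define ts6 where "ts6 = [(1::'a, kouts j off), (- qq (Suc j), kouts j ?o1)]"
  define L6 where "L6 = lbvals j ts6 vs5"
  have ks5: "set (kouts j off) \<subseteq> {..<length vs5}" "set (kouts j ?o1) \<subseteq> {..<length vs5}"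
    "set (kouts j ?o4) \<subseteq> {..<length vs5}"
    using kouts_set[of j off] kouts_set[of j ?o1] kouts_set[of j ?o4] L5 by auto
  have "\<forall>t\<in>set ts6. set (snd t) \<subseteq> {..<length vs5}" using ks5 unfolding ts6_def by auto
  from lblock_run[OF this O5, of j]
  have R6: "run n (lblock j ts6) vs5 = Some (vs5 @ L6)" and O6: "ok (vs5 @ L6)"
    unfolding L6_def by auto
  have A6: "asm j L6 = mat n n (\<lambda>(r,s). (A*C) $$ (r,s) - qq (Suc j) * (B*D) $$ (r,s))"
    unfolding L6_def
    by (subst lblock_asm[OF j(1)]) (use K_one[OF j(1)] K_neg[OF j(1) qq_in[OF j(2)]] k1 k2 M1 M2 in
        \<open>auto simp: ts6_def\<close>)
  define ts7 where "ts7 = [(1::'a, kouts j ?o4), (-1, kouts j off), (-1 - pp (Suc j), kouts j ?o1)]"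
  define L7 where "L7 = lbvals j ts7 (vs5 @ L6)"
  have "\<forall>t\<in>set ts7. set (snd t) \<subseteq> {..<length (vs5 @ L6)}" using ks5 unfolding ts7_def by auto
  from lblock_run[OF this O6, of j]
  have R7: "run n (lblock j ts7) (vs5 @ L6) = Some (vs5 @ L6 @ L7)" and O7: "ok (vs5 @ L6 @ L7)"
    unfolding L7_def by auto
  have k2': "vals (vs5 @ L6) (kouts j ?o1) = vals vs2 (kouts j ?o1)"
    using vals_ext[of vs5 "vs5 @ L6" "kouts j ?o1"] ks5 k2 by (auto simp: extends_def)
  have k4': "vals (vs5 @ L6) (kouts j ?o4) = vals vs5 (kouts j ?o4)"
    using vals_ext[of vs5 "vs5 @ L6" "kouts j ?o4"] ks5 by (auto simp: extends_def)
  have A7: "asm j L7 = mat n n (\<lambda>(r,s). (asm j L3 * asm j L4) $$ (r,s) - (A*C) $$ (r,s) - (1 + pp (Suc j)) * (B*D) $$ (r,s))"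
    unfolding L7_def
    apply (subst lblock_asm[OF j(1)])
    subgoal using K_one[OF j(1)] K_neg[OF j(1) K_one[OF j(1)]] K_diff[OF j(1) K_neg[OF j(1) K_one[OF j(1)]] pp_in[OF j(2)]]
      by (auto simp: ts7_def)
    apply (rule eq_matI)
    using k1 k2 k4' M1 M2 M5 vals_ext[of vs5 "vs5 @ L6" "kouts j off"] vals_ext[of vs5 "vs5 @ L6" "kouts j ?o1"] ks5
    by (auto simp: ts7_def extends_def algebra_simps)
  have run: "run n (kprog (Suc j) off xs ys) vs = Some (vs5 @ L6 @ L7)"
    by (simp add: Let_def run_append R1 R2 R3[unfolded ts3_def] R4[unfolded ts4_def] R5
         R6[unfolded ts6_def] R7[unfolded ts7_def])
  have ko: "kouts (Suc j) off = [length vs5..<length vs5 + length (L6 @ L7)]"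
    by (simp add: kouts_def L5 L6_def L7_def; rule arg_cong2[where f=upt]; linarith)
  have out: "vals (vs5 @ L6 @ L7) (kouts (Suc j) off) = L6 @ L7"
    unfolding ko by (rule vals_append_new) simp
  have "asm (Suc j) (L6 @ L7) = asm j L6 + xi (Suc j) \<cdot>\<^sub>m asm j L7"
    using asm_split[of "L6 @ L7" j] by (simp add: L6_def L7_def)
  also have "\<dots> = (A + xi (Suc j) \<cdot>\<^sub>m B) * (C + xi (Suc j) \<cdot>\<^sub>m D)"
    unfolding A6 A7 A3 A4
    by (rule kara_id[symmetric]) (auto simp: A_def B_def C_def D_def xi_eq[OF j(2)])
  also have "A + xi (Suc j) \<cdot>\<^sub>m B = asm (Suc j) (vals vs xs)"
    using asm_split[of "vals vs xs" j] Suc.prems(4) by (simp add: A_def B_def vals_take vals_drop)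
  also have "C + xi (Suc j) \<cdot>\<^sub>m D = asm (Suc j) (vals vs ys)"
    using asm_split[of "vals vs ys" j] Suc.prems(5) by (simp add: C_def D_def vals_take vals_drop)
  finally have fin: "asm (Suc j) (vals (vs5 @ L6 @ L7) (kouts (Suc j) off)) = asm (Suc j) (vals vs xs) * asm (Suc j) (vals vs ys)"
    unfolding out .
  have "extends vs (vs5 @ L6 @ L7)" using E1 E15 by (auto simp: extends_def)
  moreover have "length (vs5 @ L6 @ L7) = off + klen (Suc j)" using L5 by (simp add: L6_def L7_def)
  ultimately show ?case using run O7 fin by blast
qed

end


lemma xi_scal:
  assumes "x*x + p*x + q = (0::'a::field)"
  shows "sac + x*sad + x*sbc + (x*x)*sbd = sac - q*sbd + x*(sad + sbc - p*sbd)"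
proof -
  have "(sac + x*sad + x*sbc + (x*x)*sbd) - (sac - q*sbd + x*(sad + sbc - p*sbd))
     = sbd * (x*x + p*x + q)" by (simp add: algebra_simps)
  then have "(sac + x*sad + x*sbc + (x*x)*sbd) - (sac - q*sbd + x*(sad + sbc - p*sbd)) = 0"
    using assms by simp
  then show ?thesis by (simp only: right_minus_eq)
qed

lemma xi_prod:
  fixes A B C D :: "'a::field mat"
  assumes A: "A \<in> carrier_mat n n" and B: "B \<in> carrier_mat n n" and C: "C \<in> carrier_mat n n" and D: "D \<in> carrier_mat n n"
    and x: "x*x + p*x + q = 0"
  shows "(A + x \<cdot>\<^sub>m B) * (C + x \<cdot>\<^sub>m D) =
    mat n n (\<lambda>(r,s). (A*C)$$(r,s) - q * (B*D)$$(r,s)) +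
    x \<cdot>\<^sub>m mat n n (\<lambda>(r,s). (A*D)$$(r,s) + (B*C)$$(r,s) - p * (B*D)$$(r,s))"
proof (rule eq_matI)
  fix r s assume "r < dim_row (mat n n (\<lambda>(r,s). (A*C)$$(r,s) - q * (B*D)$$(r,s)) +
    x \<cdot>\<^sub>m mat n n (\<lambda>(r,s). (A*D)$$(r,s) + (B*C)$$(r,s) - p * (B*D)$$(r,s)))"
    "s < dim_col (mat n n (\<lambda>(r,s). (A*C)$$(r,s) - q * (B*D)$$(r,s)) +
    x \<cdot>\<^sub>m mat n n (\<lambda>(r,s). (A*D)$$(r,s) + (B*C)$$(r,s) - p * (B*D)$$(r,s)))"
  hence r: "r < n" and s: "s < n" by auto
  have e1: "((A + x \<cdot>\<^sub>m B) * (C + x \<cdot>\<^sub>m D)) $$ (r,s) =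
     (\<Sum>k\<in>{0..<n}. (A$$(r,k) + x * B$$(r,k)) * (C$$(k,s) + x * D$$(k,s)))"
    using A B C D r s by (simp add: scalar_prod_def)
  have e3: "(A*C)$$(r,s) = (\<Sum>k\<in>{0..<n}. A$$(r,k) * C$$(k,s))" "(B*D)$$(r,s) = (\<Sum>k\<in>{0..<n}. B$$(r,k) * D$$(k,s))"
    "(A*D)$$(r,s) = (\<Sum>k\<in>{0..<n}. A$$(r,k) * D$$(k,s))" "(B*C)$$(r,s) = (\<Sum>k\<in>{0..<n}. B$$(r,k) * C$$(k,s))"
    using A B C D r s by (simp_all add: scalar_prod_def)
  show "((A + x \<cdot>\<^sub>m B) * (C + x \<cdot>\<^sub>m D)) $$ (r,s) = (mat n n (\<lambda>(r,s). (A*C)$$(r,s) - q * (B*D)$$(r,s)) +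
    x \<cdot>\<^sub>m mat n n (\<lambda>(r,s). (A*D)$$(r,s) + (B*C)$$(r,s) - p * (B*D)$$(r,s))) $$ (r,s)"
    using r s unfolding e1
    apply (simp only: index_add_mat index_smult_mat index_mat dim_row_mat dim_col_mat split)
    apply (simp only: e3 bilin4)
    apply (rule xi_scal[OF x])
    done
qed (use A B C D in auto)

lemma inv_id:
  fixes A B Ai C :: "'a::field mat"
  assumes A: "A \<in> carrier_mat n n" and B: "B \<in> carrier_mat n n" and Ai: "Ai \<in> carrier_mat n n"
    and C: "C \<in> carrier_mat n n" and x: "x*x + p*x + q = 0"
    and Ap: "mat n n (\<lambda>(r,s). A$$(r,s) - p * B$$(r,s)) * Ai = 1\<^sub>m n"
    and Sc: "mat n n (\<lambda>(r,s). A$$(r,s) + q * (B * (Ai * B))$$(r,s)) * C = 1\<^sub>m n"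
  shows "(A + x \<cdot>\<^sub>m B) * (C + x \<cdot>\<^sub>m mat n n (\<lambda>(r,s). - ((Ai * B) * C)$$(r,s))) = 1\<^sub>m n"
proof -
  define W where "W = Ai * B"
  define T where "T = B * W"
  define D where "D = mat n n (\<lambda>(r,s). - ((Ai * B) * C)$$(r,s))"
  have W: "W \<in> carrier_mat n n" and T: "T \<in> carrier_mat n n" and WC: "W * C \<in> carrier_mat n n"
    using A B Ai C by (auto simp: W_def T_def)
  have D: "D \<in> carrier_mat n n" by (simp add: D_def)
  have Deq: "D = (-1) \<cdot>\<^sub>m (W * C)" by (rule eq_matI) (use W C in \<open>auto simp: D_def W_def\<close>)
  have BD: "B * D = (-1) \<cdot>\<^sub>m (T * C)"
    unfolding Deq T_def using mult_smult_distrib[OF B WC] assoc_mult_mat[OF B W C] by simp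
  have AD: "A * D = (-1) \<cdot>\<^sub>m (A * (W * C))"
    unfolding Deq using mult_smult_distrib[OF A WC] by simp
  have Seq: "mat n n (\<lambda>(r,s). A$$(r,s) + q * (B * (Ai * B))$$(r,s)) = A + q \<cdot>\<^sub>m T"
    by (rule eq_matI) (use A B Ai T in \<open>auto simp: T_def W_def\<close>)
  have SC: "A * C + q \<cdot>\<^sub>m (T * C) = 1\<^sub>m n"
    using Sc unfolding Seq using A T C by (simp add: add_mult_distrib_mat mult_smult_assoc_mat)
  have Apeq: "mat n n (\<lambda>(r,s). A$$(r,s) - p * B$$(r,s)) = A + (-p) \<cdot>\<^sub>m B"
    by (rule eq_matI) (use A B in auto)
  have ApW: "(A + (-p) \<cdot>\<^sub>m B) * (W * C) = B * C"
  proof -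
    have "(A + (-p) \<cdot>\<^sub>m B) * (W * C) = ((A + (-p) \<cdot>\<^sub>m B) * Ai) * B * C"
      unfolding W_def using A B Ai C by (simp add: assoc_mult_mat[of _ n n _ n _ n])
    also have "\<dots> = B * C" using Ap unfolding Apeq using B by simp
    finally show ?thesis .
  qed
  have ApW2: "A * (W * C) + (-p) \<cdot>\<^sub>m (B * (W * C)) = B * C"
    using ApW A B WC by (simp add: add_mult_distrib_mat mult_smult_assoc_mat)
  have TC: "T * C = B * (W * C)" unfolding T_def using B W C by simp
  have blk1: "mat n n (\<lambda>(r,s). (A*C)$$(r,s) - q * (B*D)$$(r,s)) = 1\<^sub>m n"
  proof (rule eq_matI)
    fix r s assume "r < dim_row (1\<^sub>m n :: 'a mat)" "s < dim_col (1\<^sub>m n :: 'a mat)"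
    hence r: "r < n" and s: "s < n" by auto
    have "(A * C + q \<cdot>\<^sub>m (T * C)) $$ (r,s) = (1\<^sub>m n :: 'a mat) $$ (r,s)" using SC by simp
    then show "mat n n (\<lambda>(r,s). (A*C)$$(r,s) - q * (B*D)$$(r,s)) $$ (r,s) = (1\<^sub>m n :: 'a mat) $$ (r,s)"
      using r s A C T unfolding BD by simp
  qed auto
  have blk2: "mat n n (\<lambda>(r,s). (A*D)$$(r,s) + (B*C)$$(r,s) - p * (B*D)$$(r,s)) = 0\<^sub>m n n"
  proof (rule eq_matI)
    fix r s assume "r < dim_row (0\<^sub>m n n :: 'a mat)" "s < dim_col (0\<^sub>m n n :: 'a mat)"
    hence r: "r < n" and s: "s < n" by auto
    have "(A * (W * C) + (-p) \<cdot>\<^sub>m (B * (W * C))) $$ (r,s) = (B * C) $$ (r,s)" using ApW2 by simp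
    then show "mat n n (\<lambda>(r,s). (A*D)$$(r,s) + (B*C)$$(r,s) - p * (B*D)$$(r,s)) $$ (r,s) = (0\<^sub>m n n :: 'a mat) $$ (r,s)"
      using r s A B C W unfolding BD AD TC by (simp add: algebra_simps)
  qed auto
  show ?thesis
    unfolding D_def[symmetric] xi_prod[OF A B C D x] blk1 blk2
    by simp
qed



lemma inv_entries:
  assumes F: "is_subfield F" and X: "X \<in> carrier_mat n n" and e: "\<forall>r<n. \<forall>s<n. X $$ (r,s) \<in> F"
    and d: "det X \<noteq> 0" and r: "r < n" and s: "s < n"
  shows "((1 / det X) \<cdot>\<^sub>m adj_mat X) $$ (r,s) \<in> F"
proof -
  have dX: "det X \<in> F" by (rule det_in[OF F X e])
  have md: "mat_delete X s r \<in> carrier_mat (n-1) (n-1)" using mat_delete_carrier[OF X] .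
  have mde: "\<forall>a<n-1. \<forall>b<n-1. mat_delete X s r $$ (a,b) \<in> F"
    using e X by (auto simp: mat_delete_def)
  have dm: "det (mat_delete X s r) \<in> F" by (rule det_in[OF F md mde])
  have eq: "((1 / det X) \<cdot>\<^sub>m adj_mat X) $$ (r,s) = (1 / det X) * ((-1)^(s+r) * det (mat_delete X s r))"
    using X r s by (simp add: adj_mat_def cofactor_def)
  have m1: "(-1::'a) ^ (s+r) \<in> F" by (intro subf_pow[OF F] subf_basic(5)[OF F] subf_basic(2)[OF F])
  show ?thesis unfolding eq
    by (intro subf_basic(4)[OF F] subf_div[OF F] subf_basic(2)[OF F] dX m1 dm)
qed

fun ilen :: "nat \<Rightarrow> nat" where
  "ilen 0 = 1"
| "ilen (Suc j) = 2 * ilen j + 3 * klen j + 4 * 2 ^ j"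

lemma ilen_ge: "2 ^ j \<le> ilen j"
  by (induction j) auto

definition iouts :: "nat \<Rightarrow> nat \<Rightarrow> nat list" where
  "iouts j off = [off + ilen j - 2 ^ j..<off + ilen j]"

lemma iouts_len[simp]: "length (iouts j off) = 2 ^ j"
  using ilen_ge[of j] by (simp add: iouts_def)

lemma iouts_set: "set (iouts j off) \<subseteq> {..<off + ilen j}"
  by (auto simp: iouts_def)

lemma pow23: "(2::nat) ^ j \<le> 3 ^ j" by (rule power_mono) auto

context tower begin

fun iprog :: "nat \<Rightarrow> nat \<Rightarrow> nat list \<Rightarrow> 'a instr list" where
  "iprog 0 off ys = [Inv (ys ! 0)]"
| "iprog (Suc j) off ys = (let h = 2 ^ j; o1 = off + h; o2 = o1 + ilen j; o3 = o2 + klen j;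
     o4 = o3 + klen j; o5 = o4 + h; o6 = o5 + ilen j in
     lblock j [(1, take h ys), (- pp (Suc j), drop h ys)] @
     iprog j o1 [off..<o1] @
     kprog j o2 (iouts j o1) (drop h ys) @
     kprog j o3 (drop h ys) (kouts j o2) @
     lblock j [(1, take h ys), (qq (Suc j), kouts j o3)] @
     iprog j o5 [o4..<o5] @
     kprog j o6 (kouts j o2) (iouts j o5) @
     lblock j [(1, iouts j o5)] @
     lblock j [(-1, kouts j o6)])"

lemma iprog_len[simp]: "length (iprog j off ys) = ilen j"
  by (induction j arbitrary: off ys) (simp_all add: Let_def)

lemma iprog_counts: "count_mul (iprog j off ys) = 3 * (3 ^ j - 2 ^ j) \<and> count_inv (iprog j off ys) = 2 ^ j"
proof (induction j arbitrary: off ys)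
  case 0 show ?case by (simp add: count_mul_def count_inv_def)
next
  case (Suc j)
  have "(2::nat) ^ j \<le> 3 ^ j" by (rule pow23)
  then show ?case using Suc by (simp add: Let_def kprog_counts)
qed

lemma iprog_over: "prog_over (K 0) (iprog j off ys)"
proof (induction j arbitrary: off ys)
  case 0 show ?case by (simp add: prog_over_def)
next
  case (Suc j) then show ?case by (simp add: Let_def lblock_over kprog_over)
qed

lemma split_one:
  assumes j: "j < m" and A: "A \<in> carrier_mat n n" and B: "B \<in> carrier_mat n n"
    and e: "\<forall>r<n. \<forall>s<n. A $$ (r,s) \<in> K j \<and> B $$ (r,s) \<in> K j"
    and X: "A + xi (Suc j) \<cdot>\<^sub>m B = 1\<^sub>m n"
  shows "A = 1\<^sub>m n \<and> B = 0\<^sub>m n n"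
proof -
  have jm: "j \<le> m" using j by simp
  have ent: "A $$ (r,s) + xi (Suc j) * B $$ (r,s) = (if r = s then 1 else 0)" if "r < n" "s < n" for r s
    using arg_cong[OF X, of "\<lambda>M. M $$ (r,s)"] that A B by simp
  have B0: "B $$ (r,s) = 0" if "r < n" "s < n" for r s
  proof (rule ccontr)
    assume nz: "B $$ (r,s) \<noteq> 0"
    have "xi (Suc j) = ((if r = s then 1 else 0) - A $$ (r,s)) / B $$ (r,s)"
      using ent[OF that] nz by (simp add: field_simps)
    moreover have "((if r = s then 1 else 0) - A $$ (r,s)) / B $$ (r,s) \<in> K j"
      using e that subf_basic(1,2)[OF subf[OF jm]]
      by (intro subf_div[OF subf[OF jm]] subf_diff[OF subf[OF jm]]) auto
    ultimately show False using xi_notin[OF j] by simp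
  qed
  have "A = 1\<^sub>m n" by (rule eq_matI) (use ent B0 A in auto)
  moreover have "B = 0\<^sub>m n n" by (rule eq_matI) (use B0 B in auto)
  ultimately show ?thesis ..
qed

end


context tower begin

lemma lb_asm_eq:
  assumes "j \<le> m" "\<forall>t\<in>set ts. fst t \<in> K j \<and> length (snd t) = 2 ^ j"
    "mat n n (\<lambda>(r,s). \<Sum>t\<leftarrow>ts. fst t * asm j (vals vs (snd t)) $$ (r,s)) = M"
  shows "asm j (lbvals j ts vs) = M"
  using lblock_asm[OF assms(1,2)] assms(3) by simp

lemma inv_sem:
  assumes "j \<le> m" "ok vs" "length vs = off" "length ys = 2^j" "set ys \<subseteq> {..<off}"
  shows "(\<forall>vs'. run n (iprog j off ys) vs = Some vs' \<longrightarrow> extends vs vs' \<and> length vs' = off + ilen j \<and> ok vs' \<and>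
      asm j (vals vs ys) * asm j (vals vs' (iouts j off)) = 1\<^sub>m n \<and>
      asm j (vals vs' (iouts j off)) * asm j (vals vs ys) = 1\<^sub>m n)
    \<and> (asm j (vals vs ys) = 1\<^sub>m n \<longrightarrow> run n (iprog j off ys) vs \<noteq> None)"
  using assms
proof (induction j arbitrary: off ys vs)
  case 0
  define y where "y = ys ! 0"
  have ys: "ys = [y]" using 0(4) unfolding y_def by (auto intro: nth_equalityI)
  have y: "y < off" using 0(5) ys by auto
  define X where "X = vs ! y"
  have OX: "X \<in> carrier_mat n n" "\<forall>r<n. \<forall>s<n. X $$ (r,s) \<in> K 0" using ok_nth[OF 0(2)] y 0(3) X_def by auto
  have aX: "asm 0 (vals vs ys) = X" using asm0 OX ys by (simp add: vals_def X_def)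
  let ?P = "\<lambda>B. B \<in> carrier_mat n n \<and> X * B = 1\<^sub>m n \<and> B * X = 1\<^sub>m n"
  have run: "run n (iprog 0 off ys) vs = (if \<exists>B. ?P B then Some (vs @ [SOME B. ?P B]) else None)"
    using y 0(3) by (simp add: ys X_def) blast
  have io: "iouts 0 off = [off]" by (simp add: iouts_def)
  define Bs where "Bs = (SOME B. ?P B)"
  have c1: "extends vs (vs @ [Bs]) \<and> length (vs @ [Bs]) = off + ilen 0 \<and> ok (vs @ [Bs]) \<and>
      asm 0 (vals vs ys) * asm 0 (vals (vs @ [Bs]) (iouts 0 off)) = 1\<^sub>m n \<and>
      asm 0 (vals (vs @ [Bs]) (iouts 0 off)) * asm 0 (vals vs ys) = 1\<^sub>m n" if ex: "\<exists>B. ?P B"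
  proof -
    have PB: "?P Bs" using someI_ex[OF ex] Bs_def by simp
    have dX: "det X \<noteq> 0" using inv_exists_iff[OF OX(1)] ex by simp
    have Bs_eq: "Bs = (1/det X) \<cdot>\<^sub>m adj_mat X" unfolding Bs_def
      by (rule some_inv[OF OX(1) adj_inverse(3)[OF OX(1) dX] adj_inverse(1,2)[OF OX(1) dX]])
    have okB: "ok [Bs]" unfolding ok_def using PB inv_entries[OF subf[of 0] OX(1) OX(2) dX] Bs_eq by auto
    have vB: "vals (vs @ [Bs]) (iouts 0 off) = [Bs]" using 0(3) io by (simp add: vals_def nth_append)
    show ?thesis using 0(2,3) okB PB aX vB asm0[of Bs] by (auto simp: extends_def)
  qed
  show ?case
  proof (cases "\<exists>B. ?P B")
    case True
    then show ?thesis using c1 run by (simp add: Bs_def)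
  next
    case False
    have "X \<noteq> 1\<^sub>m n" using False by (metis one_carrier_mat left_mult_one_mat)
    then show ?thesis using run False aX by simp
  qed
next
  case (Suc j)
  have j: "j \<le> m" "j < m" using Suc.prems by auto
  let ?h = "2 ^ j :: nat"
  let ?a = "take ?h ys" and ?b = "drop ?h ys"
  let ?o1 = "off + ?h"
  let ?o2 = "off + ?h + ilen j"
  let ?o3 = "off + ?h + ilen j + klen j"
  let ?o4 = "off + ?h + ilen j + klen j + klen j"
  let ?o5 = "off + ?h + ilen j + klen j + klen j + ?h"
  let ?o6 = "off + ?h + ilen j + klen j + klen j + ?h + ilen j"
  have lens: "length ?a = ?h" "length ?b = ?h" using Suc.prems by auto
  have sets: "set ?a \<subseteq> {..<off}" "set ?b \<subseteq> {..<off}"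
    using Suc.prems(5) set_take_subset[of ?h ys] set_drop_subset[of ?h ys] by auto
  define A where "A = asm j (vals vs ?a)"
  define B where "B = asm j (vals vs ?b)"
  have cA: "A \<in> carrier_mat n n" and cB: "B \<in> carrier_mat n n" by (simp_all add: A_def B_def)
  have X: "asm (Suc j) (vals vs ys) = A + xi (Suc j) \<cdot>\<^sub>m B"
    using asm_split[of "vals vs ys" j] Suc.prems(4) by (simp add: A_def B_def vals_take vals_drop)
  have okab: "ok (vals vs ?a)" "ok (vals vs ?b)" using ok_vals[OF Suc.prems(2)] sets Suc.prems(3) by auto
  have eAB: "\<forall>r<n. \<forall>s<n. A $$ (r,s) \<in> K j \<and> B $$ (r,s) \<in> K j"
    using asm_entry_in[OF j(1) okab(1)] asm_entry_in[OF j(1) okab(2)] lens by (simp add: A_def B_def)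
  have hX: "A = 1\<^sub>m n \<and> B = 0\<^sub>m n n" if "asm (Suc j) (vals vs ys) = 1\<^sub>m n"
    using split_one[OF j(2) cA cB eAB] that X by simp
  have Kp: "- pp (Suc j) \<in> K j" "qq (Suc j) \<in> K j" "1 \<in> K j" "-1 \<in> K j"
    using K_neg[OF j(1) pp_in[OF j(2)]] qq_in[OF j(2)] K_one[OF j(1)] K_neg[OF j(1) K_one[OF j(1)]] by auto
  define ts1 where "ts1 = [(1::'a, ?a), (- pp (Suc j), ?b)]"
  define L1 where "L1 = lbvals j ts1 vs"
  have "\<forall>t\<in>set ts1. set (snd t) \<subseteq> {..<length vs}" using sets Suc.prems(3) unfolding ts1_def by auto
  from lblock_run[OF this Suc.prems(2), of j]
  have R1: "run n (lblock j ts1) vs = Some (vs @ L1)" and O1: "ok (vs @ L1)" unfolding L1_def by auto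
  have A1: "asm j L1 = mat n n (\<lambda>(r,s). A$$(r,s) - pp (Suc j) * B$$(r,s))"
    unfolding L1_def
    by (rule lb_asm_eq[OF j(1)]) (use lens Kp in \<open>auto simp: ts1_def A_def B_def\<close>)
  have len1: "length (vs @ L1) = ?o1" using Suc.prems(3) by (simp add: L1_def)
  have v1: "vals (vs @ L1) [off..<?o1] = L1"
    using vals_append_new[of vs off L1] Suc.prems(3) by (simp add: L1_def)
  have pre1: "length [off..<?o1] = 2 ^ j" "set [off..<?o1] \<subseteq> {..<?o1}" by auto
  note IH2 = Suc.IH[OF j(1) O1 len1 pre1, unfolded v1]
  have E1: "extends vs (vs @ L1)" by (simp add: extends_def)
  have A1one: "asm j L1 = 1\<^sub>m n" if "asm (Suc j) (vals vs ys) = 1\<^sub>m n"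
    unfolding A1 using hX[OF that] by (intro eq_matI) auto
  show ?case
  proof (cases "run n (iprog j ?o1 [off..<?o1]) (vs @ L1)")
    case None
    have "run n (iprog (Suc j) off ys) vs = None"
      by (simp add: Let_def run_append R1[unfolded ts1_def] None)
    moreover have "asm (Suc j) (vals vs ys) \<noteq> 1\<^sub>m n" using A1one IH2 None by auto
    ultimately show ?thesis by simp
  next
    case (Some vs2)
    define Ai where "Ai = asm j (vals vs2 (iouts j ?o1))"
    have E2: "extends (vs @ L1) vs2" and L2: "length vs2 = ?o2" and O2: "ok vs2"
      and P2a: "asm j L1 * Ai = 1\<^sub>m n" and P2b: "Ai * asm j L1 = 1\<^sub>m n"
      using IH2 Some unfolding Ai_def by auto
    have E02: "extends vs vs2" using E1 E2 extends_trans by blast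
    have vb2: "vals vs2 ?b = vals vs ?b" "vals vs2 ?a = vals vs ?a"
      using vals_ext[OF E02] sets Suc.prems(3) by auto
    have s3: "set (iouts j ?o1) \<subseteq> {..<?o2}" "set ?b \<subseteq> {..<?o2}" using iouts_set[of j ?o1] sets by auto
    obtain vs3 where R3: "run n (kprog j ?o2 (iouts j ?o1) ?b) vs2 = Some vs3" and E3: "extends vs2 vs3"
      and L3: "length vs3 = ?o2 + klen j" and O3: "ok vs3"
      and M3: "asm j (vals vs3 (kouts j ?o2)) = Ai * B"
      using kmul_sem[OF j(1) O2 L2 iouts_len lens(2) s3] vb2 unfolding Ai_def B_def by auto
    have E03: "extends vs vs3" using E02 E3 extends_trans by blast
    have s4: "set ?b \<subseteq> {..<?o3}" "set (kouts j ?o2) \<subseteq> {..<?o3}" using kouts_set[of j ?o2] sets by auto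
    obtain vs4 where R4: "run n (kprog j ?o3 ?b (kouts j ?o2)) vs3 = Some vs4" and E4: "extends vs3 vs4"
      and L4: "length vs4 = ?o3 + klen j" and O4: "ok vs4"
      and M4: "asm j (vals vs4 (kouts j ?o3)) = B * (Ai * B)"
      using kmul_sem[OF j(1) O3 L3 lens(2) kouts_len s4] vals_ext[OF E03, of ?b] sets Suc.prems(3) M3
      unfolding B_def by auto
    have E04: "extends vs vs4" using E03 E4 extends_trans by blast
    define ts5 where "ts5 = [(1::'a, ?a), (qq (Suc j), kouts j ?o3)]"
    define L5 where "L5 = lbvals j ts5 vs4"
    have "\<forall>t\<in>set ts5. set (snd t) \<subseteq> {..<length vs4}"
      using sets L4 kouts_set[of j ?o3] unfolding ts5_def by fastforce
    from lblock_run[OF this O4, of j]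
    have R5: "run n (lblock j ts5) vs4 = Some (vs4 @ L5)" and O5: "ok (vs4 @ L5)" unfolding L5_def by auto
    have va4: "vals vs4 ?a = vals vs ?a" using vals_ext[OF E04] sets Suc.prems(3) by auto
    have A5: "asm j L5 = mat n n (\<lambda>(r,s). A$$(r,s) + qq (Suc j) * (B * (Ai * B))$$(r,s))"
      unfolding L5_def
      by (rule lb_asm_eq[OF j(1)]) (use lens Kp va4 M4 in \<open>auto simp: ts5_def A_def\<close>)
    have len5: "length (vs4 @ L5) = ?o5" using L4 by (simp add: L5_def)
    have v5: "vals (vs4 @ L5) [?o4..<?o5] = L5"
      using vals_append_new[of vs4 ?o4 L5] L4 by (simp add: L5_def)
    have pre5: "length [?o4..<?o5] = 2 ^ j" "set [?o4..<?o5] \<subseteq> {..<?o5}" by auto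
    note IH6 = Suc.IH[OF j(1) O5 len5 pre5, unfolded v5]
    have E05: "extends vs (vs4 @ L5)" using E04 by (auto simp: extends_def)
    have A5one: "asm j L5 = 1\<^sub>m n" if "asm (Suc j) (vals vs ys) = 1\<^sub>m n"
    proof -
      have h: "A = 1\<^sub>m n" "B = 0\<^sub>m n n" using hX[OF that] by auto
      have "Ai = 1\<^sub>m n" using P2a A1one[OF that] left_mult_one_mat[of Ai n n] by (simp add: Ai_def)
      then have "B * (Ai * B) = 0\<^sub>m n n" using h by simp
      then show ?thesis unfolding A5 using h by (intro eq_matI) auto
    qed
    show ?thesis
    proof (cases "run n (iprog j ?o5 [?o4..<?o5]) (vs4 @ L5)")
      case None
      have "run n (iprog (Suc j) off ys) vs = None"
        by (simp add: Let_def run_append R1[unfolded ts1_def] Some R3 R4 R5[unfolded ts5_def] None)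
      moreover have "asm (Suc j) (vals vs ys) \<noteq> 1\<^sub>m n" using A5one IH6 None by auto
      ultimately show ?thesis by simp
    next
      case Some6: (Some vs6)
      define Cm where "Cm = asm j (vals vs6 (iouts j ?o5))"
      have E6: "extends (vs4 @ L5) vs6" and L6: "length vs6 = ?o6" and O6: "ok vs6"
        and P6a: "asm j L5 * Cm = 1\<^sub>m n" and P6b: "Cm * asm j L5 = 1\<^sub>m n"
        using IH6 Some6 unfolding Cm_def by auto
      have E36: "extends vs3 vs6" using E4 E6 by (auto simp: extends_def)
      have s7: "set (kouts j ?o2) \<subseteq> {..<?o6}" "set (iouts j ?o5) \<subseteq> {..<?o6}"
        using kouts_set[of j ?o2] iouts_set[of j ?o5] by auto
      have vW6: "vals vs6 (kouts j ?o2) = vals vs3 (kouts j ?o2)"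
        using vals_ext[OF E36] kouts_set[of j ?o2] L3 by auto
      obtain vs7 where R7: "run n (kprog j ?o6 (kouts j ?o2) (iouts j ?o5)) vs6 = Some vs7" and E7: "extends vs6 vs7"
        and L7: "length vs7 = ?o6 + klen j" and O7: "ok vs7"
        and M7: "asm j (vals vs7 (kouts j ?o6)) = (Ai * B) * Cm"
        using kmul_sem[OF j(1) O6 L6 kouts_len iouts_len s7] vW6 M3 unfolding Cm_def by auto
      define ts8 where "ts8 = [(1::'a, iouts j ?o5)]"
      define L8 where "L8 = lbvals j ts8 vs7"
      have "\<forall>t\<in>set ts8. set (snd t) \<subseteq> {..<length vs7}"
        using iouts_set[of j ?o5] L7 unfolding ts8_def by auto
      from lblock_run[OF this O7, of j]
      have R8: "run n (lblock j ts8) vs7 = Some (vs7 @ L8)" and O8: "ok (vs7 @ L8)" unfolding L8_def by auto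
      have vC7: "vals vs7 (iouts j ?o5) = vals vs6 (iouts j ?o5)"
        using vals_ext[OF E7] iouts_set[of j ?o5] L6 by auto
      have A8: "asm j L8 = Cm"
        unfolding L8_def
        by (rule lb_asm_eq[OF j(1)]) (use Kp vC7 in \<open>auto simp: ts8_def Cm_def asm_def intro!: eq_matI\<close>)
      define ts9 where "ts9 = [(-1::'a, kouts j ?o6)]"
      define L9 where "L9 = lbvals j ts9 (vs7 @ L8)"
      have "\<forall>t\<in>set ts9. set (snd t) \<subseteq> {..<length (vs7 @ L8)}"
        using kouts_set[of j ?o6] L7 unfolding ts9_def by auto
      from lblock_run[OF this O8, of j]
      have R9: "run n (lblock j ts9) (vs7 @ L8) = Some (vs7 @ L8 @ L9)" and O9: "ok (vs7 @ L8 @ L9)"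
        unfolding L9_def by auto
      have vWC: "vals (vs7 @ L8) (kouts j ?o6) = vals vs7 (kouts j ?o6)"
        using vals_ext[of vs7 "vs7 @ L8"] kouts_set[of j ?o6] L7 by (auto simp: extends_def)
      have A9: "asm j L9 = mat n n (\<lambda>(r,s). - ((Ai * B) * Cm)$$(r,s))"
        unfolding L9_def
        by (rule lb_asm_eq[OF j(1)]) (use Kp vWC M7 in \<open>auto simp: ts9_def\<close>)
      have runT: "run n (iprog (Suc j) off ys) vs = Some (vs7 @ L8 @ L9)"
        by (simp add: Let_def run_append R1[unfolded ts1_def] Some R3 R4 R5[unfolded ts5_def] Some6 R7
             R8[unfolded ts8_def] R9[unfolded ts9_def])
      have io: "iouts (Suc j) off = [length vs7..<length vs7 + length (L8 @ L9)]"
        by (simp add: iouts_def L7 L8_def L9_def; rule arg_cong2[where f=upt]; linarith)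
      have out: "vals (vs7 @ L8 @ L9) (iouts (Suc j) off) = L8 @ L9"
        unfolding io by (rule vals_append_new) simp
      have Y: "asm (Suc j) (L8 @ L9) = Cm + xi (Suc j) \<cdot>\<^sub>m mat n n (\<lambda>(r,s). - ((Ai * B) * Cm)$$(r,s))"
        using asm_split[of "L8 @ L9" j] A8 A9 by (simp add: L8_def L9_def)
      have cAi: "Ai \<in> carrier_mat n n" and cCm: "Cm \<in> carrier_mat n n" by (simp_all add: Ai_def Cm_def)
      have XY: "asm (Suc j) (vals vs ys) * asm (Suc j) (L8 @ L9) = 1\<^sub>m n"
        unfolding X Y
        by (rule inv_id[OF cA cB cAi cCm xi_eq[OF j(2)]]) (use P2a A1 P6a A5 in simp_all)
      have YX: "asm (Suc j) (L8 @ L9) * asm (Suc j) (vals vs ys) = 1\<^sub>m n"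
        by (rule mat_mult_left_right_inverse[OF _ _ XY]) (simp_all add: asm_def)
      have e79: "extends vs7 (vs7 @ L8 @ L9)" by (simp add: extends_def)
      have ext: "extends vs (vs7 @ L8 @ L9)"
        using extends_trans[OF extends_trans[OF extends_trans[OF E05 E6] E7] e79] .
      have len: "length (vs7 @ L8 @ L9) = off + ilen (Suc j)" using L7 by (simp add: L8_def L9_def)
      show ?thesis using runT ext len O9 XY YX out by simp
    qed
  qed
qed

end


definition convprog :: "(nat \<Rightarrow> nat \<Rightarrow> 'a) \<Rightarrow> nat list \<Rightarrow> nat \<Rightarrow> 'a instr list" where
  "convprog M xs N2 = map (\<lambda>i. Lin (map (\<lambda>l. (M l i, xs ! l)) [0..<length xs])) [0..<N2]"

lemma convprog_len[simp]: "length (convprog M xs N2) = N2" by (simp add: convprog_def)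
lemma convprog_counts[simp]: "count_mul (convprog M xs N2) = 0" "count_inv (convprog M xs N2) = 0"
  by (simp_all add: convprog_def count_mul_def count_inv_def filter_empty_conv)

context tower begin

lemma conv_run:
  assumes "\<forall>l<length xs. \<forall>i<N2. M l i \<in> K 0" "set xs \<subseteq> {..<length vs}" "ok vs"
  shows "run n (convprog M xs N2) vs = Some (vs @ map (\<lambda>i. lc n vs (map (\<lambda>l. (M l i, xs ! l)) [0..<length xs])) [0..<N2])
    \<and> ok (vs @ map (\<lambda>i. lc n vs (map (\<lambda>l. (M l i, xs ! l)) [0..<length xs])) [0..<N2])"
proof -
  have "\<forall>cs\<in>set (map (\<lambda>i. map (\<lambda>l. (M l i, xs ! l)) [0..<length xs]) [0..<N2]). \<forall>p\<in>set cs. snd p < length vs"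
    using assms(2) nth_mem by fastforce
  from run_lins[OF this, of n]
  have "run n (convprog M xs N2) vs = Some (vs @ map (\<lambda>i. lc n vs (map (\<lambda>l. (M l i, xs ! l)) [0..<length xs])) [0..<N2])"
    by (simp add: convprog_def o_def)
  moreover have "ok [lc n vs (map (\<lambda>l. (M l i, xs ! l)) [0..<length xs])]" if "i < N2" for i
    by (rule lc_ok[OF assms(3)]) (use assms that nth_mem in fastforce)
  then have "ok (map (\<lambda>i. lc n vs (map (\<lambda>l. (M l i, xs ! l)) [0..<length xs])) [0..<N2])"
    unfolding ok_def by auto
  ultimately show ?thesis using assms(3) by simp
qed

lemma conv_over: "\<forall>l<length xs. \<forall>i<N2. M l i \<in> K 0 \<Longrightarrow> prog_over (K 0) (convprog M xs N2)"
  by (auto simp: convprog_def prog_over_def)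

lemma top_sem:
  fixes b :: "nat \<Rightarrow> 'a" and N :: nat and Min Mout :: "nat \<Rightarrow> nat \<Rightarrow> 'a"
  assumes N: "N = 2 ^ m"
    and bMin: "\<forall>l<N. b l = (\<Sum>i<N. Min l i * beta m ! i)" and Min_in: "\<forall>l<N. \<forall>i<N. Min l i \<in> K 0"
    and bMout: "\<forall>i<N. beta m ! i = (\<Sum>l<N. Mout i l * b l)" and Mout_in: "\<forall>i<N. \<forall>l<N. Mout i l \<in> K 0"
    and x: "ok x" "length x = N"
  shows "(\<forall>vs. run n (convprog Min [0..<N] N @ iprog m (2*N) [N..<2*N] @ convprog Mout (iouts m (2*N)) N) x = Some vs \<longrightarrow>
      assemble n b x * assemble n b (vals vs [2*N + ilen m..<2*N + ilen m + N]) = 1\<^sub>m n \<and>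
      assemble n b (vals vs [2*N + ilen m..<2*N + ilen m + N]) * assemble n b x = 1\<^sub>m n) \<and>
    (assemble n b x = 1\<^sub>m n \<longrightarrow> run n (convprog Min [0..<N] N @ iprog m (2*N) [N..<2*N] @ convprog Mout (iouts m (2*N)) N) x \<noteq> None)"
proof -
  define Y where "Y = map (\<lambda>i. lc n x (map (\<lambda>l. (Min l i, [0..<N] ! l)) [0..<length [0..<N]])) [0..<N]"
  have s0: "set [0..<N] \<subseteq> {..<length x}" using x(2) by auto
  have m0: "\<forall>l<length [0..<N]. \<forall>i<N. Min l i \<in> K 0" using Min_in by simp
  have R1: "run n (convprog Min [0..<N] N) x = Some (x @ Y)" and O1: "ok (x @ Y)"
    using conv_run[OF m0 s0 x(1)] unfolding Y_def by auto
  have aY: "asm m Y = assemble n b x"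
  proof -
    have "asm m Y = assemble n b (vals x [0..<N])"
      unfolding asm_def Y_def by (rule assemble_lin) (use bMin in simp)
    also have "vals x [0..<N] = x" using x(2) by (auto simp: vals_def intro: nth_equalityI)
    finally show ?thesis .
  qed
  have lenY: "length Y = N" by (simp add: Y_def)
  have len1: "length (x @ Y) = 2 * N" using x(2) lenY by simp
  have vY: "vals (x @ Y) [N..<2*N] = Y" using vals_append_new[of x N Y] x(2) lenY by (simp add: mult_2)
  have pre: "length [N..<2*N] = 2 ^ m" "set [N..<2*N] \<subseteq> {..<2*N}" using N by auto
  note IHinv = inv_sem[OF le_refl O1 len1 pre, unfolded vY aY]
  show ?thesis
  proof (cases "run n (iprog m (2*N) [N..<2*N]) (x @ Y)")
    case None
    have "run n (convprog Min [0..<N] N @ iprog m (2*N) [N..<2*N] @ convprog Mout (iouts m (2*N)) N) x = None"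
      by (simp add: run_append R1 None)
    moreover have "assemble n b x \<noteq> 1\<^sub>m n" using IHinv None by auto
    ultimately show ?thesis by simp
  next
    case (Some vs2)
    define Inv where "Inv = asm m (vals vs2 (iouts m (2*N)))"
    have E2: "extends (x @ Y) vs2" and L2: "length vs2 = 2 * N + ilen m" and O2: "ok vs2"
      and P1: "assemble n b x * Inv = 1\<^sub>m n" and P2: "Inv * assemble n b x = 1\<^sub>m n"
      using IHinv Some unfolding Inv_def by auto
    define Zs where "Zs = map (\<lambda>i. lc n vs2 (map (\<lambda>l. (Mout l i, iouts m (2*N) ! l)) [0..<length (iouts m (2*N))])) [0..<N]"
    have s2: "set (iouts m (2*N)) \<subseteq> {..<length vs2}" using iouts_set[of m "2*N"] L2 by simp
    have m2: "\<forall>l<length (iouts m (2*N)). \<forall>i<N. Mout l i \<in> K 0" using Mout_in N by simp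
    have R3: "run n (convprog Mout (iouts m (2*N)) N) vs2 = Some (vs2 @ Zs)"
      using conv_run[OF m2 s2 O2] unfolding Zs_def by auto
    have aZ: "assemble n b Zs = Inv"
      unfolding Zs_def Inv_def asm_def
      by (rule assemble_lin) (use bMout N in simp)
    have lenZ: "length Zs = N" by (simp add: Zs_def)
    have out: "vals (vs2 @ Zs) [2*N + ilen m..<2*N + ilen m + N] = Zs"
      using vals_append_new[of vs2 "2*N + ilen m" Zs] L2 lenZ by simp
    have "run n (convprog Min [0..<N] N @ iprog m (2*N) [N..<2*N] @ convprog Mout (iouts m (2*N)) N) x = Some (vs2 @ Zs)"
      by (simp add: run_append R1 Some R3)
    then show ?thesis using out aZ P1 P2 by simp
  qed
qed

end



lemma sum2: "(\<Sum>i<(2::nat). f i) = f 0 + f 1"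
  by (simp add: numeral_2_eq_2)

lemma quad_ext:
  assumes F: "is_subfield F" and E: "is_subfield E" and sub: "F \<subseteq> E" and ne: "F \<noteq> E"
    and d: "ext_degree_eq F E 2"
  shows "\<exists>\<xi> p q. \<xi> \<in> E \<and> \<xi> \<notin> F \<and> p \<in> F \<and> q \<in> F \<and> \<xi> * \<xi> + p * \<xi> + q = 0 \<and>
     (\<forall>x\<in>E. \<exists>a c. a \<in> F \<and> c \<in> F \<and> x = a + c * \<xi>)"
proof -
  obtain e where e: "is_basis_over F E e 2" using d unfolding ext_degree_eq_def by auto
  have eE: "e 0 \<in> E" "e 1 \<in> E" using e unfolding is_basis_over_def by auto
  have sp: "\<exists>c0 c1. c0 \<in> F \<and> c1 \<in> F \<and> x = c0 * e 0 + c1 * e 1" if "x \<in> E" for x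
  proof -
    have B: "\<forall>x\<in>E. \<exists>!c. (\<forall>i<2. c i \<in> F) \<and> (\<forall>i\<ge>2. c i = 0) \<and> x = (\<Sum>i<2. c i * e i)"
      using e unfolding is_basis_over_def by (rule conjunct2)
    have "\<exists>!c. (\<forall>i<2. c i \<in> F) \<and> (\<forall>i\<ge>2. c i = 0) \<and> x = (\<Sum>i<2. c i * e i)"
      using B that by (rule bspec)
    then have "\<exists>c. (\<forall>i<2. c i \<in> F) \<and> (\<forall>i\<ge>2. c i = 0) \<and> x = (\<Sum>i<2. c i * e i)"
      by (rule ex1_implies_ex)
    then obtain c where "\<forall>i<2. c i \<in> F" "x = (\<Sum>i<2. c i * e i)" by blast
    then show ?thesis by (intro exI[of _ "c 0"] exI[of _ "c 1"]) (simp add: sum2)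
  qed
  obtain u0 u1 where u: "u0 \<in> F" "u1 \<in> F" "1 = u0 * e 0 + u1 * e 1"
    using sp[OF subf_basic(2)[OF E]] by blast
  have "\<exists>\<xi>\<in>E. \<forall>x\<in>E. \<exists>a c. a \<in> F \<and> c \<in> F \<and> x = a + c * \<xi>"
  proof (cases "u1 = 0")
    case False
    have e1: "e 1 = (1 - u0 * e 0) / u1" using u(3) False by (simp add: field_simps)
    show ?thesis
    proof (intro bexI[of _ "e 0"] ballI)
      fix x assume "x \<in> E"
      then obtain c0 c1 where c: "c0 \<in> F" "c1 \<in> F" "x = c0 * e 0 + c1 * e 1" using sp by blast
      have "x = c1 / u1 + (c0 - c1 * u0 / u1) * e 0"
        unfolding c(3) e1 using False by (simp add: field_simps)
      moreover have "c1 / u1 \<in> F" "c0 - c1 * u0 / u1 \<in> F"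
        using c u by (simp_all add: subf_div[OF F] subf_diff[OF F] subf_basic(4)[OF F])
      ultimately show "\<exists>a c. a \<in> F \<and> c \<in> F \<and> x = a + c * e 0" by blast
    qed (use eE in auto)
  next
    case True
    then have ue: "u0 * e 0 = 1" using u(3) by simp
    then have u0: "u0 \<noteq> 0" by auto
    have e0: "e 0 = 1 / u0" using ue u0 by (simp add: field_simps mult.commute)
    show ?thesis
    proof (intro bexI[of _ "e 1"] ballI)
      fix x assume "x \<in> E"
      then obtain c0 c1 where c: "c0 \<in> F" "c1 \<in> F" "x = c0 * e 0 + c1 * e 1" using sp by blast
      have "x = c0 / u0 + c1 * e 1" unfolding c(3) e0 by simp
      moreover have "c0 / u0 \<in> F" using c u by (simp add: subf_div[OF F])
      ultimately show "\<exists>a c. a \<in> F \<and> c \<in> F \<and> x = a + c * e 1" using c by blast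
    qed (use eE in auto)
  qed
  then obtain \<xi> where xE: "\<xi> \<in> E" and span: "\<forall>x\<in>E. \<exists>a c. a \<in> F \<and> c \<in> F \<and> x = a + c * \<xi>" by blast
  have xF: "\<xi> \<notin> F"
  proof
    assume xF: "\<xi> \<in> F"
    have "E \<subseteq> F"
    proof
      fix x assume "x \<in> E"
      then obtain a c where "a \<in> F" "c \<in> F" "x = a + c * \<xi>" using span by blast
      then show "x \<in> F" using xF subf_basic(3)[OF F] subf_basic(4)[OF F] by metis
    qed
    then show False using sub ne by auto
  qed
  obtain a c where ac: "a \<in> F" "c \<in> F" "\<xi> * \<xi> = a + c * \<xi>"
    using span subf_basic(4)[OF E xE xE] by blast
  have eq: "\<xi> * \<xi> + (- c) * \<xi> + (- a) = 0" using ac(3) by simp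
  show ?thesis
    using xE xF subf_basic(5)[OF F ac(1)] subf_basic(5)[OF F ac(2)] eq span by blast
qed



theorem proposition4p7:
  fixes K :: "nat \<Rightarrow> 'a::field set" and m n :: nat and b :: "nat \<Rightarrow> 'a"
  assumes subfields: "\<forall>j\<le>m. is_subfield (K j)"
    and tower: "\<forall>j\<in>{1..m}. K (j - 1) \<subseteq> K j \<and> K (j - 1) \<noteq> K j \<and> ext_degree_eq (K (j - 1)) (K j) 2"
    and n: "n \<ge> 1"
    and basis: "is_basis_over (K 0) (K m) b (2 ^ m)"
  shows "\<exists>p outs.
     prog_over (K 0) p \<and>
     count_mul p = 3 * (3 ^ m - 2 ^ m) \<and> count_inv p = 2 ^ m \<and>
     length outs = 2 ^ m \<and> (\<forall>i\<in>set outs. i < 2 ^ m + length p) \<and>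
     generic (K 0) (2 ^ m) n
       (\<lambda>Xs. \<exists>vs. run n p Xs = Some vs \<and>
          assemble n b Xs * assemble n b (map (\<lambda>i. vs ! i) outs) = 1\<^sub>m n \<and>
          assemble n b (map (\<lambda>i. vs ! i) outs) * assemble n b Xs = 1\<^sub>m n)"
proof -
  have F0: "is_subfield (K 0)" using subfields by simp
  define Qp where "Qp = (\<lambda>j (t::'a \<times> 'a \<times> 'a). fst t \<in> K j \<and> fst t \<notin> K (j - 1) \<and> fst (snd t) \<in> K (j - 1) \<and>
     snd (snd t) \<in> K (j - 1) \<and> fst t * fst t + fst (snd t) * fst t + snd (snd t) = 0 \<and>
     (\<forall>x\<in>K j. \<exists>a c. a \<in> K (j - 1) \<and> c \<in> K (j - 1) \<and> x = a + c * fst t))"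
  define T where "T = (\<lambda>j. SOME t. Qp j t)"
  have QT: "Qp j (T j)" if "j \<in> {1..m}" for j
  proof -
    have "\<exists>\<xi> p q. \<xi> \<in> K j \<and> \<xi> \<notin> K (j - 1) \<and> p \<in> K (j - 1) \<and> q \<in> K (j - 1) \<and> \<xi> * \<xi> + p * \<xi> + q = 0 \<and>
     (\<forall>x\<in>K j. \<exists>a c. a \<in> K (j - 1) \<and> c \<in> K (j - 1) \<and> x = a + c * \<xi>)"
      by (rule quad_ext) (use subfields tower that in auto)
    then have "\<exists>t. Qp j t" unfolding Qp_def by fastforce
    then show ?thesis unfolding T_def by (rule someI_ex)
  qed
  interpret tw: tower K m n "\<lambda>j. fst (T j)" "\<lambda>j. fst (snd (T j))" "\<lambda>j. snd (snd (T j))"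
  proof (unfold_locales)
    fix j assume j: "j < m"
    have Q: "Qp (Suc j) (T (Suc j))" using QT[of "Suc j"] j by auto
    show "K j \<subseteq> K (Suc j)" using tower j by (metis atLeastAtMost_iff diff_Suc_1 le_add1 plus_1_eq_Suc Suc_leI)
    show "fst (T (Suc j)) \<in> K (Suc j)" using Q by (simp add: Qp_def)
    show "fst (T (Suc j)) \<notin> K j" using Q by (simp add: Qp_def)
    show "fst (snd (T (Suc j))) \<in> K j" using Q by (simp add: Qp_def)
    show "snd (snd (T (Suc j))) \<in> K j" using Q by (simp add: Qp_def)
    show "fst (T (Suc j)) * fst (T (Suc j)) + fst (snd (T (Suc j))) * fst (T (Suc j)) + snd (snd (T (Suc j))) = 0"
      using Q by (simp add: Qp_def)
  next
    fix j x assume j: "j < m" and x: "x \<in> K (Suc j)"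
    have Q: "Qp (Suc j) (T (Suc j))" using QT[of "Suc j"] j by auto
    show "\<exists>a c. a \<in> K j \<and> c \<in> K j \<and> x = a + c * fst (T (Suc j))" using Q x by (simp add: Qp_def)
  qed (use subfields in auto)
  define N where "N = (2::nat) ^ m"
  have bK: "b l \<in> K m" if "l < N" for l using basis that unfolding is_basis_over_def N_def by auto
  define Min where "Min = (\<lambda>l. SOME d. (\<forall>i. d i \<in> K 0) \<and> b l = (\<Sum>i<N. d i * tw.beta m ! i))"
  have Min: "(\<forall>i. Min l i \<in> K 0) \<and> b l = (\<Sum>i<N. Min l i * tw.beta m ! i)" if "l < N" for l
  proof -
    have "\<exists>d. (\<forall>i. d i \<in> K 0) \<and> b l = (\<Sum>i<N. d i * tw.beta m ! i)"
      using tw.beta_span[OF le_refl bK[OF that]] unfolding N_def .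
    then show ?thesis unfolding Min_def by (rule someI_ex)
  qed
  have basisE: "\<exists>c. (\<forall>l<N. c l \<in> K 0) \<and> (\<forall>l\<ge>N. c l = 0) \<and> x = (\<Sum>l<N. c l * b l)" if "x \<in> K m" for x
  proof -
    have B: "\<forall>x\<in>K m. \<exists>!c. (\<forall>l<N. c l \<in> K 0) \<and> (\<forall>l\<ge>N. c l = 0) \<and> x = (\<Sum>l<N. c l * b l)"
      using basis unfolding is_basis_over_def N_def by (rule conjunct2)
    have "\<exists>!c. (\<forall>l<N. c l \<in> K 0) \<and> (\<forall>l\<ge>N. c l = 0) \<and> x = (\<Sum>l<N. c l * b l)"
      using B that by (rule bspec)
    then show ?thesis by (rule ex1_implies_ex)
  qed
  define Mout where "Mout = (\<lambda>i. SOME c. (\<forall>l<N. c l \<in> K 0) \<and> (\<forall>l\<ge>N. c l = 0) \<and> tw.beta m ! i = (\<Sum>l<N. c l * b l))"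
  have Mout: "(\<forall>l<N. Mout i l \<in> K 0) \<and> tw.beta m ! i = (\<Sum>l<N. Mout i l * b l)" if "i < N" for i
  proof -
    have "\<exists>c. (\<forall>l<N. c l \<in> K 0) \<and> (\<forall>l\<ge>N. c l = 0) \<and> tw.beta m ! i = (\<Sum>l<N. c l * b l)"
      by (rule basisE, rule tw.beta_nth_in) (use that in \<open>auto simp: N_def\<close>)
    from someI_ex[OF this] show ?thesis unfolding Mout_def by blast
  qed
  define p where "p = convprog Min [0..<N] N @ tw.iprog m (2*N) [N..<2*N] @ convprog Mout (iouts m (2*N)) N"
  define outs where "outs = [2*N + ilen m..<2*N + ilen m + N]"
  have m1: "\<forall>l<length [0..<N]. \<forall>i<N. Min l i \<in> K 0"
  proof (intro allI impI)
    fix l i assume "l < length [0..<N]" "i < N"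
    then have "l < N" by simp
    then show "Min l i \<in> K 0" using Min by blast
  qed
  have m2: "\<forall>l<length (iouts m (2*N)). \<forall>i<N. Mout l i \<in> K 0"
  proof (intro allI impI)
    fix l i assume "l < length (iouts m (2*N))" "i < N"
    then have "l < N" "i < N" by (simp_all add: N_def)
    then show "Mout l i \<in> K 0" using Mout by blast
  qed
  have over: "prog_over (K 0) p"
    unfolding p_def using tw.conv_over[OF m1] tw.conv_over[OF m2] tw.iprog_over by simp
  have sem: "(\<forall>vs. run n p x = Some vs \<longrightarrow>
      assemble n b x * assemble n b (vals vs outs) = 1\<^sub>m n \<and>
      assemble n b (vals vs outs) * assemble n b x = 1\<^sub>m n) \<and>
    (assemble n b x = 1\<^sub>m n \<longrightarrow> run n p x \<noteq> None)" if x: "x \<in> coord_space (K 0) N n" for x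
  proof -
    have okx: "tw.ok x" "length x = N" using x unfolding coord_space_def tw.ok_def by auto
    have bMin: "\<forall>l<N. b l = (\<Sum>i<N. Min l i * tw.beta m ! i)" using Min by blast
    have Min_in: "\<forall>l<N. \<forall>i<N. Min l i \<in> K 0" using Min by blast
    have bMout: "\<forall>i<N. tw.beta m ! i = (\<Sum>l<N. Mout i l * b l)" using Mout by blast
    have Mout_in: "\<forall>i<N. \<forall>l<N. Mout i l \<in> K 0" using Mout by blast
    show ?thesis unfolding p_def outs_def
      by (rule tw.top_sem[OF N_def bMin Min_in bMout Mout_in okx])
  qed
  obtain g Q where g: "g \<in> polyfun (K 0) N n" and gQ: "\<forall>x\<in>coord_space (K 0) N n. (g x \<noteq> 0 \<longleftrightarrow> run n p x \<noteq> None)"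
    using prog_rep[OF F0 over, of N n] by blast
  obtain c where c: "\<forall>l<N. c l \<in> K 0" "1 = (\<Sum>l<N. c l * b l)"
    using basisE[OF subf_basic(2)[OF subfields[rule_format, of m]]] by auto
  define x0 where "x0 = map (\<lambda>i. c i \<cdot>\<^sub>m (1\<^sub>m n :: 'a mat)) [0..<N]"
  have x0c: "x0 \<in> coord_space (K 0) N n"
    unfolding coord_space_def x0_def using c(1) subf_basic(1)[OF F0] by auto
  have ax0: "assemble n b x0 = 1\<^sub>m n"
  proof (rule eq_matI)
    fix r s assume "r < dim_row (1\<^sub>m n :: 'a mat)" "s < dim_col (1\<^sub>m n :: 'a mat)"
    hence r: "r < n" and s: "s < n" by auto
    have "assemble n b x0 $$ (r,s) = (\<Sum>i<N. b i * (c i * (if r = s then 1 else 0)))"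
      using r s by (simp add: assemble_index x0_def)
    also have "\<dots> = (if r = s then 1 else 0)"
      using c(2) by (simp add: sum_distrib_right[symmetric] mult.commute)
    finally show "assemble n b x0 $$ (r,s) = (1\<^sub>m n :: 'a mat) $$ (r,s)" using r s by simp
  qed auto
  have gx0: "g x0 \<noteq> 0" using gQ x0c sem[OF x0c] ax0 by auto
  have gen: "generic (K 0) N n
       (\<lambda>Xs. \<exists>vs. run n p Xs = Some vs \<and>
          assemble n b Xs * assemble n b (map (\<lambda>i. vs ! i) outs) = 1\<^sub>m n \<and>
          assemble n b (map (\<lambda>i. vs ! i) outs) * assemble n b Xs = 1\<^sub>m n)"
    unfolding generic_def
  proof (intro exI[of _ "{x \<in> coord_space (K 0) N n. g x = 0}"] conjI ballI)
    show "zariski_closed (K 0) N n {x \<in> coord_space (K 0) N n. g x = 0}"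
      unfolding zariski_closed_def using g by (intro exI[of _ "{g}"]) auto
    show "{x \<in> coord_space (K 0) N n. g x = 0} \<noteq> coord_space (K 0) N n" using x0c gx0 by auto
  next
    fix Xs assume "Xs \<in> coord_space (K 0) N n - {x \<in> coord_space (K 0) N n. g x = 0}"
    then have X: "Xs \<in> coord_space (K 0) N n" and gX: "g Xs \<noteq> 0" by auto
    then obtain vs where vs: "run n p Xs = Some vs" using gQ by auto
    then show "\<exists>vs. run n p Xs = Some vs \<and>
          assemble n b Xs * assemble n b (map (\<lambda>i. vs ! i) outs) = 1\<^sub>m n \<and>
          assemble n b (map (\<lambda>i. vs ! i) outs) * assemble n b Xs = 1\<^sub>m n"
      using sem[OF X] by (auto simp: vals_def)
  qed
  show ?thesis
  proof (intro exI[of _ p] exI[of _ outs] conjI)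
    show "prog_over (K 0) p" by (rule over)
    show "count_mul p = 3 * (3 ^ m - 2 ^ m)" unfolding p_def using tw.iprog_counts by simp
    show "count_inv p = 2 ^ m" unfolding p_def using tw.iprog_counts by simp
    show "length outs = 2 ^ m" by (simp add: outs_def N_def)
    show "\<forall>i\<in>set outs. i < 2 ^ m + length p" by (auto simp: outs_def p_def N_def)
    show "generic (K 0) (2 ^ m) n
       (\<lambda>Xs. \<exists>vs. run n p Xs = Some vs \<and>
          assemble n b Xs * assemble n b (map (\<lambda>i. vs ! i) outs) = 1\<^sub>m n \<and>
          assemble n b (map (\<lambda>i. vs ! i) outs) * assemble n b Xs = 1\<^sub>m n)"
      using gen by (simp add: N_def)
  qed
qed


end
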